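(* Let $H_1,\dots,H_n$ be two-terminal signed graphs, $H_i=H_i(x_{i-1},x_i)$, and let $G=\mathcal S(H_1,\dots,H_n)$ where $n=|\mathcal B(G)|$ (i.e. $H_1,\dots,H_n$ are exactly the parts of $G$) and $|\mathcal B_2(G)|\ge 1$. Let $\theta^*=(1,1,-1,-1)$ if $|\mathcal B_2(G)|=1$, and let $\theta^*\in\{(1,1,-1,-1),(-1,-1,-1,-1)\}$ be arbitrary if $|\mathcal B_2(G)|\ge 2$. Suppose every $H_i\in\mathcal B_2(G)$ has a $\Psi_{x_{i-1}x_i}(2)$-cover. Then $G$ has a signed subgraph $6$-cover of the form $$\mathcal F_0\cup 2\mathcal B_0(G)\cup\{P_1,P_2,P_3,P_4\}\cup\{T_1,T_2,T_3,T_4\},$$ where $\mathcal F_0$ is a family of signed circuits; $2\mathcal B_0(G)$ denotes the family containing each member of $\mathcal B_0(G)$ twice; $P_1,\dots,P_4$ are $x_0x_n$-paths of $G$ with $(\sigma(P_1),\sigma(P_2),\sigma(P_3),\sigma(P_4))=\theta^*$; $T_1,T_2$ are tadpoles of $G$ at $x_0$ whose unbalanced circuit lies in the part of $\mathcal B_0(G)\cup\mathcal B_2(G)$ with minimum subscript; and $T_3,T_4$ are tadpoles of $G$ at $x_n$ whose unbalanced circuit lies in the part of $\mathcal B_0(G)\cup\mathcal B_2(G)$ with maximum subscript.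
   Context: Signed graph: a finite graph (multiple edges and loops allowed) with signature $\sigma:E\to\{1,-1\}$. For a subgraph or edge set $S$, $\sigma(S)=\prod_{e\in S}\sigma(e)$; a path $P$ is positive if $\sigma(P)=1$ and negative otherwise; an $xy$-path is a path with ends $x,y$. A circuit is a connected $2$-regular subgraph; it is balanced if it has an even number of negative edges, unbalanced otherwise. A barbell is the union of two unbalanced circuits $C_1,C_2$ and a path $P$ such that either $P$ is trivial and $C_1,C_2$ share exactly one vertex, or $C_1,C_2$ are vertex-disjoint and $P$ joins them meeting $C_1\cup C_2$ only at its ends. A signed circuit is a balanced circuit or a barbell. A tadpole at $x$ is the union of an $xy$-path $P$ (possibly trivial) and an unbalanced circuit $C$ with $V(P)\cap V(C)=\{y\}$. A signed subgraph $6$-cover of $G$ is a family (multiset) of subgraphs of $G$ such that every edge of $G$ lies in exactly $6$ members. For distinct vertices $x,y$ and an integer $t\in[0,3]$, a $\Psi_{xy}(t)$-cover of $G$ is a signed subgraph $6$-cover of $G$ consisting of exactly $t$ positive $xy$-paths, $t$ negative $xy$-paths, $t$ tadpoles at $x$, $6-2t$ tadpoles at $y$, and some signed circuits. A two-terminal signed graph $H(x,y)$ is a connected nonempty signed graph $H$ with a source terminal $x$ and a target terminal $y$, where $x=y$ if and only if $H$ is a single negative loop. For two-terminal signed graphs $H_i=H_i(x_i,y_i)$ ($i\in[1,n]$, pairwise disjoint), the series connection $\mathcal S(H_1,\dots,H_n)$ is the two-terminal signed graph with source $x_1$ and target $y_n$ obtained from $H_1\cup\dots\cup H_n$ by identifying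 $y_{i-1}$ with $x_i$ for each $i\in[2,n]$. If $G=\mathcal S(H_1,\dots,H_n)$ with $n$ maximum, each $H_i$ is called a part of $G$ and $\mathcal B(G)$ is the set of parts. $\mathcal B_0(G)$ is the set of parts whose two terminals coincide (these are negative loops), $\mathcal B_1(G)$ the set of parts with distinct terminals and exactly one edge, and $\mathcal B_2(G)$ the set of parts with distinct terminals and at least two edges. *)

theory Defs
  imports Main "HOL-Library.Multiset"
begin

text \<open>A signed graph is given by a vertex set V, an edge set E, an incidence map
  ends (each edge has a set of one end (loop) or two ends) and a signature sigma.\<close>

type_synonym ('v,'e) sub = "'v set \<times> 'e set"

definition signed_graph :: "('e \<Rightarrow> 'v set) \<Rightarrow> ('e \<Rightarrow> int) \<Rightarrow> 'v set \<Rightarrow> 'e set \<Rightarrow> bool" where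
  "signed_graph ends sigma V E \<longleftrightarrow> finite V \<and> finite E \<and>
     (\<forall>e\<in>E. ends e \<subseteq> V \<and> (card (ends e) = 1 \<or> card (ends e) = 2) \<and> (sigma e = 1 \<or> sigma e = -1))"

definition subgraph_of :: "('e \<Rightarrow> 'v set) \<Rightarrow> ('v,'e) sub \<Rightarrow> 'v set \<Rightarrow> 'e set \<Rightarrow> bool" where
  "subgraph_of ends S V E \<longleftrightarrow> fst S \<subseteq> V \<and> snd S \<subseteq> E \<and> (\<forall>e\<in>snd S. ends e \<subseteq> fst S)"

definition sub_union :: "('v,'e) sub \<Rightarrow> ('v,'e) sub \<Rightarrow> ('v,'e) sub" where
  "sub_union A B = (fst A \<union> fst B, snd A \<union> snd B)"

definition sgn_of :: "('e \<Rightarrow> int) \<Rightarrow> ('v,'e) sub \<Rightarrow> int" where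
  "sgn_of sigma S = (\<Prod>e\<in>snd S. sigma e)"

text \<open>an xy-path (possibly trivial when x = y)\<close>
definition is_path :: "('e \<Rightarrow> 'v set) \<Rightarrow> 'v \<Rightarrow> 'v \<Rightarrow> ('v,'e) sub \<Rightarrow> bool" where
  "is_path ends x y P \<longleftrightarrow> (\<exists>vs es. length vs = Suc (length es) \<and> distinct vs \<and>
      hd vs = x \<and> last vs = y \<and>
      (\<forall>i<length es. ends (es ! i) = {vs ! i, vs ! Suc i}) \<and>
      P = (set vs, set es))"

definition connected_sub :: "('e \<Rightarrow> 'v set) \<Rightarrow> ('v,'e) sub \<Rightarrow> bool" where
  "connected_sub ends S \<longleftrightarrow> fst S \<noteq> {} \<and>
     (\<forall>u\<in>fst S. \<forall>v\<in>fst S. (\<lambda>a b. \<exists>e\<in>snd S. a \<in> ends e \<and> b \<in> ends e)\<^sup>*\<^sup>* u v)"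

definition degree :: "('e \<Rightarrow> 'v set) \<Rightarrow> ('v,'e) sub \<Rightarrow> 'v \<Rightarrow> nat" where
  "degree ends S v = card {e\<in>snd S. v \<in> ends e \<and> card (ends e) = 2}
                     + 2 * card {e\<in>snd S. ends e = {v}}"

definition is_circuit :: "('e \<Rightarrow> 'v set) \<Rightarrow> ('v,'e) sub \<Rightarrow> bool" where
  "is_circuit ends C \<longleftrightarrow> finite (fst C) \<and> finite (snd C) \<and>
     (\<forall>e\<in>snd C. ends e \<subseteq> fst C) \<and> connected_sub ends C \<and>
     (\<forall>v\<in>fst C. degree ends C v = 2)"

definition balanced_circuit :: "('e \<Rightarrow> 'v set) \<Rightarrow> ('e \<Rightarrow> int) \<Rightarrow> ('v,'e) sub \<Rightarrow> bool" where
  "balanced_circuit ends sigma C \<longleftrightarrow> is_circuit ends C \<and> even (card {e\<in>snd C. sigma e = -1})"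

definition unbalanced_circuit :: "('e \<Rightarrow> 'v set) \<Rightarrow> ('e \<Rightarrow> int) \<Rightarrow> ('v,'e) sub \<Rightarrow> bool" where
  "unbalanced_circuit ends sigma C \<longleftrightarrow> is_circuit ends C \<and> odd (card {e\<in>snd C. sigma e = -1})"

definition is_barbell :: "('e \<Rightarrow> 'v set) \<Rightarrow> ('e \<Rightarrow> int) \<Rightarrow> ('v,'e) sub \<Rightarrow> bool" where
  "is_barbell ends sigma B \<longleftrightarrow> (\<exists>C1 C2 P.
      unbalanced_circuit ends sigma C1 \<and> unbalanced_circuit ends sigma C2 \<and>
      B = sub_union (sub_union C1 C2) P \<and>
      ((\<exists>v. fst C1 \<inter> fst C2 = {v} \<and> snd C1 \<inter> snd C2 = {} \<and> P = ({v}, {})) \<or>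
       (fst C1 \<inter> fst C2 = {} \<and> (\<exists>u v. u \<in> fst C1 \<and> v \<in> fst C2 \<and> is_path ends u v P \<and>
            fst P \<inter> (fst C1 \<union> fst C2) = {u, v}))))"

definition signed_circuit :: "('e \<Rightarrow> 'v set) \<Rightarrow> ('e \<Rightarrow> int) \<Rightarrow> ('v,'e) sub \<Rightarrow> bool" where
  "signed_circuit ends sigma S \<longleftrightarrow> balanced_circuit ends sigma S \<or> is_barbell ends sigma S"

definition tadpole_with :: "('e \<Rightarrow> 'v set) \<Rightarrow> ('e \<Rightarrow> int) \<Rightarrow> 'v \<Rightarrow> ('v,'e) sub \<Rightarrow> ('v,'e) sub \<Rightarrow> bool" where
  "tadpole_with ends sigma x T C \<longleftrightarrow> (\<exists>y P. is_path ends x y P \<and> unbalanced_circuit ends sigma C \<and>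
      fst P \<inter> fst C = {y} \<and> T = sub_union P C)"

definition tadpole :: "('e \<Rightarrow> 'v set) \<Rightarrow> ('e \<Rightarrow> int) \<Rightarrow> 'v \<Rightarrow> ('v,'e) sub \<Rightarrow> bool" where
  "tadpole ends sigma x T \<longleftrightarrow> (\<exists>C. tadpole_with ends sigma x T C)"

definition six_cover :: "('e \<Rightarrow> 'v set) \<Rightarrow> 'v set \<Rightarrow> 'e set \<Rightarrow> ('v,'e) sub multiset \<Rightarrow> bool" where
  "six_cover ends V E F \<longleftrightarrow> (\<forall>S\<in>#F. subgraph_of ends S V E) \<and>
     (\<forall>e\<in>E. size (filter_mset (\<lambda>S. e \<in> snd S) F) = 6)"

definition psi_cover :: "('e \<Rightarrow> 'v set) \<Rightarrow> ('e \<Rightarrow> int) \<Rightarrow> 'v set \<Rightarrow> 'e set \<Rightarrow> 'v \<Rightarrow> 'v \<Rightarrow> nat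
     \<Rightarrow> ('v,'e) sub multiset \<Rightarrow> bool" where
  "psi_cover ends sigma V E x y t F \<longleftrightarrow> x \<noteq> y \<and> t \<le> 3 \<and> six_cover ends V E F \<and>
     (\<exists>A B C D S. F = A + B + C + D + S \<and>
        size A = t \<and> size B = t \<and> size C = t \<and> size D = 6 - 2 * t \<and>
        (\<forall>P\<in>#A. is_path ends x y P \<and> sgn_of sigma P = 1) \<and>
        (\<forall>P\<in>#B. is_path ends x y P \<and> sgn_of sigma P = -1) \<and>
        (\<forall>T\<in>#C. tadpole ends sigma x T) \<and>
        (\<forall>T\<in>#D. tadpole ends sigma y T) \<and>
        (\<forall>Z\<in>#S. signed_circuit ends sigma Z))"

definition single_negative_loop :: "('e \<Rightarrow> 'v set) \<Rightarrow> ('e \<Rightarrow> int) \<Rightarrow> ('v,'e) sub \<Rightarrow> bool" where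
  "single_negative_loop ends sigma H \<longleftrightarrow> (\<exists>v e. H = ({v}, {e}) \<and> ends e = {v} \<and> sigma e = -1)"

definition two_terminal :: "('e \<Rightarrow> 'v set) \<Rightarrow> ('e \<Rightarrow> int) \<Rightarrow> ('v,'e) sub \<Rightarrow> 'v \<Rightarrow> 'v \<Rightarrow> bool" where
  "two_terminal ends sigma H x y \<longleftrightarrow> connected_sub ends H \<and> snd H \<noteq> {} \<and>
     x \<in> fst H \<and> y \<in> fst H \<and> (x = y \<longleftrightarrow> single_negative_loop ends sigma H)"

text \<open>The signed graph (V,E) with source x 0 and target x n is the series connection
  S(H 1, ..., H n) of the two-terminal signed graphs H i = H i (x (i-1), x i), described
  internally: the H i are subgraphs whose edge sets partition E, whose vertex sets cover V,
  and which meet only in the identified terminals.\<close>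
definition series_decomp :: "('e \<Rightarrow> 'v set) \<Rightarrow> ('e \<Rightarrow> int) \<Rightarrow> 'v set \<Rightarrow> 'e set \<Rightarrow> nat
     \<Rightarrow> (nat \<Rightarrow> 'v) \<Rightarrow> (nat \<Rightarrow> ('v,'e) sub) \<Rightarrow> bool" where
  "series_decomp ends sigma V E n x H \<longleftrightarrow> n \<ge> 1 \<and>
     (\<forall>i\<in>{1..n}. subgraph_of ends (H i) V E \<and> two_terminal ends sigma (H i) (x (i-1)) (x i)) \<and>
     V = (\<Union>i\<in>{1..n}. fst (H i)) \<and> E = (\<Union>i\<in>{1..n}. snd (H i)) \<and>
     (\<forall>i\<in>{1..n}. \<forall>j\<in>{1..n}. i \<noteq> j \<longrightarrow>
         snd (H i) \<inter> snd (H j) = {} \<and> fst (H i) \<inter> fst (H j) \<subseteq> x ` {0..n}) \<and>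
     (\<forall>k\<in>{0..n}. \<forall>i\<in>{1..n}. x k \<in> fst (H i) \<longleftrightarrow> (x k = x (i-1) \<or> x k = x i)) \<and>
     (\<forall>k l. k < l \<and> l \<le> n \<longrightarrow> (x k = x l \<longleftrightarrow> (\<forall>m\<in>{k<..l}. x (m-1) = x m)))"

text \<open>H 1, ..., H n are exactly the parts of G = G(x 0, x n): n is maximum.\<close>
definition parts_decomp :: "('e \<Rightarrow> 'v set) \<Rightarrow> ('e \<Rightarrow> int) \<Rightarrow> 'v set \<Rightarrow> 'e set \<Rightarrow> nat
     \<Rightarrow> (nat \<Rightarrow> 'v) \<Rightarrow> (nat \<Rightarrow> ('v,'e) sub) \<Rightarrow> bool" where
  "parts_decomp ends sigma V E n x H \<longleftrightarrow> series_decomp ends sigma V E n x H \<and>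
     (\<forall>n' x' H'. series_decomp ends sigma V E n' x' H' \<and> x' 0 = x 0 \<and> x' n' = x n \<longrightarrow> n' \<le> n)"

text \<open>index sets of B_0(G), B_1(G), B_2(G)\<close>
definition B0 :: "nat \<Rightarrow> (nat \<Rightarrow> 'v) \<Rightarrow> (nat \<Rightarrow> ('v,'e) sub) \<Rightarrow> nat set" where
  "B0 n x H = {i\<in>{1..n}. x (i-1) = x i}"
definition B1 :: "nat \<Rightarrow> (nat \<Rightarrow> 'v) \<Rightarrow> (nat \<Rightarrow> ('v,'e) sub) \<Rightarrow> nat set" where
  "B1 n x H = {i\<in>{1..n}. x (i-1) \<noteq> x i \<and> card (snd (H i)) = 1}"
definition B2 :: "nat \<Rightarrow> (nat \<Rightarrow> 'v) \<Rightarrow> (nat \<Rightarrow> ('v,'e) sub) \<Rightarrow> nat set" where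
  "B2 n x H = {i\<in>{1..n}. x (i-1) \<noteq> x i \<and> card (snd (H i)) \<ge> 2}"

end

theory Submission
  imports Defs
begin


fun pw :: "('e \<Rightarrow> 'v set) \<Rightarrow> 'v list \<Rightarrow> 'e list \<Rightarrow> bool" where
  "pw ends [v] [] = True"
| "pw ends (u # v # vs) (e # es) = (ends e = {u, v} \<and> pw ends (v # vs) es)"
| "pw ends _ _ = False"

lemma pw_iff: "(length vs = Suc (length es) \<and> (\<forall>i<length es. ends (es ! i) = {vs ! i, vs ! Suc i})) \<longleftrightarrow> pw ends vs es"
proof (induction es arbitrary: vs)
  case Nil
  then show ?case by (cases vs; cases "tl vs") auto
next
  case (Cons e es)
  show ?case
  proof (cases vs)
    case Nil then show ?thesis by simp
  next
    case (Cons u vs')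
    show ?thesis
    proof (cases vs')
      case Nil then show ?thesis using Cons by simp
    next
      case (Cons v vs'')
      have "(\<forall>i<length (e#es). ends ((e#es) ! i) = {vs ! i, vs ! Suc i}) \<longleftrightarrow>
            ends e = {u, v} \<and> (\<forall>i<length es. ends (es ! i) = {vs' ! i, vs' ! Suc i})"
        using \<open>vs = u # vs'\<close> Cons by (auto simp: less_Suc_eq_0_disj)
      then show ?thesis using Cons.IH[of vs'] \<open>vs = u # vs'\<close> Cons by auto
    qed
  qed
qed

lemma is_path_pw: "is_path ends x y P \<longleftrightarrow> (\<exists>vs es. pw ends vs es \<and> distinct vs \<and> hd vs = x \<and> last vs = y \<and> P = (set vs, set es))"
  unfolding is_path_def pw_iff[symmetric] by blast

lemma pw_ne: "pw ends vs es \<Longrightarrow> vs \<noteq> []"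
  by (cases vs) auto

lemma pw_append: "pw ends vs1 es1 \<Longrightarrow> pw ends vs2 es2 \<Longrightarrow> last vs1 = hd vs2 \<Longrightarrow> pw ends (vs1 @ tl vs2) (es1 @ es2)"
proof (induction ends vs1 es1 rule: pw.induct)
  case (1 ends v)
  then show ?case using pw_ne[of ends vs2 es2] by (cases vs2) auto
next
  case (2 ends u v vs e es)
  then show ?case by auto
qed auto

lemma pw_rev: "pw ends vs es \<Longrightarrow> pw ends (rev vs) (rev es)"
proof (induction ends vs es rule: pw.induct)
  case (2 ends u v vs e es)
  have "pw ends (rev (v # vs) @ tl [v, u]) (rev es @ [e])"
    by (rule pw_append) (use 2 in \<open>auto simp: insert_commute\<close>)
  then show ?case by simp
qed auto

lemma pw_edges: "pw ends vs es \<Longrightarrow> e \<in> set es \<Longrightarrow> ends e \<subseteq> set vs"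
  by (induction ends vs es rule: pw.induct) auto

lemma path_basic: "is_path ends a b P \<Longrightarrow> a \<in> fst P \<and> b \<in> fst P \<and> finite (fst P) \<and> finite (snd P) \<and> (\<forall>e\<in>snd P. ends e \<subseteq> fst P)"
  unfolding is_path_pw using pw_ne pw_edges by fastforce

lemma path_triv: "is_path ends a a ({a}, {})"
  unfolding is_path_pw by (rule exI[of _ "[a]"], rule exI[of _ "[]"]) auto

lemma path_same: "is_path ends a a P \<Longrightarrow> P = ({a}, {})"
proof -
  assume "is_path ends a a P"
  then obtain vs es where h: "pw ends vs es" "distinct vs" "hd vs = a" "last vs = a" "P = (set vs, set es)"
    unfolding is_path_pw by blast
  obtain w ws where vs: "vs = w # ws" using pw_ne[OF h(1)] by (cases vs) auto
  have "ws = []"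
  proof (rule ccontr)
    assume "ws \<noteq> []"
    then have "last vs \<in> set ws" using vs by simp
    then show False using h vs by auto
  qed
  then show ?thesis using h vs by (cases es) auto
qed

lemma path_rev: "is_path ends a b P \<Longrightarrow> is_path ends b a P"
  unfolding is_path_pw
  apply (elim exE conjE)
  subgoal for vs es
    apply (rule exI[of _ "rev vs"], rule exI[of _ "rev es"])
    using pw_rev pw_ne by (auto simp: hd_rev last_rev)
  done

lemma path_concat:
  assumes "is_path ends a b P" "is_path ends b c R" "fst P \<inter> fst R \<subseteq> {b}"
  shows "is_path ends a c (sub_union P R)"
proof -
  obtain vs es where h: "pw ends vs es" "distinct vs" "hd vs = a" "last vs = b" "P = (set vs, set es)"
    using assms(1) unfolding is_path_pw by blast
  obtain ws fs where g: "pw ends ws fs" "distinct ws" "hd ws = b" "last ws = c" "R = (set ws, set fs)"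
    using assms(2) unfolding is_path_pw by blast
  obtain w ws' where ws: "ws = w # ws'" using pw_ne[OF g(1)] by (cases ws) auto
  have "pw ends (vs @ tl ws) (es @ fs)" using pw_append h g by metis
  moreover have "set (vs @ tl ws) = set vs \<union> set ws" using ws h g pw_ne[OF h(1)] by auto
  moreover have "distinct (vs @ tl ws)" using ws h g assms(3) by auto
  moreover have "hd (vs @ tl ws) = a" using h pw_ne[OF h(1)] by simp
  moreover have "last (vs @ tl ws) = c" using ws h g by (cases ws') auto
  ultimately show ?thesis unfolding is_path_pw sub_union_def using h g
    by (intro exI[of _ "vs @ tl ws"] exI[of _ "es @ fs"]) auto
qed

lemma edge_path: "ends e = {a, b} \<Longrightarrow> a \<noteq> b \<Longrightarrow> is_path ends a b ({a, b}, {e})"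
  unfolding is_path_pw by (rule exI[of _ "[a,b]"], rule exI[of _ "[e]"]) auto




lemma sub_union_simps[simp]: "fst (sub_union A B) = fst A \<union> fst B" "snd (sub_union A B) = snd A \<union> snd B"
  by (simp_all add: sub_union_def)

lemma tadpole_basic: "tadpole_with ends sigma b T C \<Longrightarrow> b \<in> fst T \<and> fst C \<subseteq> fst T \<and> snd C \<subseteq> snd T \<and> unbalanced_circuit ends sigma C"
  unfolding tadpole_with_def using path_basic by fastforce

lemma tadpole_prepend:
  assumes Q: "is_path ends a b Q" and T: "tadpole_with ends sigma b T C" and I: "fst Q \<inter> fst T \<subseteq> {b}"
  shows "tadpole_with ends sigma a (sub_union Q T) C"
proof -
  obtain y P where P: "is_path ends b y P" "unbalanced_circuit ends sigma C" "fst P \<inter> fst C = {y}" "T = sub_union P C"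
    using T unfolding tadpole_with_def by blast
  have QP: "is_path ends a y (sub_union Q P)"
    by (rule path_concat[OF Q P(1)]) (use I P(4) in auto)
  have bP: "b \<in> fst P" using path_basic[OF P(1)] by simp
  have "fst (sub_union Q P) \<inter> fst C = {y}"
  proof
    show "fst (sub_union Q P) \<inter> fst C \<subseteq> {y}"
    proof
      fix v assume v: "v \<in> fst (sub_union Q P) \<inter> fst C"
      show "v \<in> {y}"
      proof (cases "v \<in> fst P")
        case True then show ?thesis using v P(3) by auto
      next
        case False
        then have "v \<in> fst Q" using v by auto
        then have "v = b" using I v P(4) by auto
        then show ?thesis using bP False by simp
      qed
    qed
  qed (use P(3) in auto)
  moreover have "sub_union Q T = sub_union (sub_union Q P) C"
    using P(4) by (auto simp: sub_union_def)
  ultimately show ?thesis unfolding tadpole_with_def using QP P(2) by blast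
qed

lemma barbell_join:
  assumes U: "tadpole_with ends sigma b U C1" and W: "tadpole_with ends sigma b W C2"
    and I: "fst U \<inter> fst W \<subseteq> {b}" and J: "snd U \<inter> snd W = {}"
  shows "is_barbell ends sigma (sub_union U W)"
proof -
  obtain y1 P1 where P1: "is_path ends b y1 P1" "unbalanced_circuit ends sigma C1" "fst P1 \<inter> fst C1 = {y1}" "U = sub_union P1 C1"
    using U unfolding tadpole_with_def by blast
  obtain y2 P2 where P2: "is_path ends b y2 P2" "unbalanced_circuit ends sigma C2" "fst P2 \<inter> fst C2 = {y2}" "W = sub_union P2 C2"
    using W unfolding tadpole_with_def by blast
  have b1: "b \<in> fst P1" using path_basic[OF P1(1)] by simp
  have b2: "b \<in> fst P2" using path_basic[OF P2(1)] by simp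
  show ?thesis
  proof (cases "b \<in> fst C1 \<and> b \<in> fst C2")
    case True
    then have "y1 = b" "y2 = b" using P1(3) P2(3) b1 b2 by auto
    then have e1: "P1 = ({b}, {})" and e2: "P2 = ({b}, {})" using P1(1) P2(1) path_same by metis+
    have "fst C1 \<inter> fst C2 = {b}" using True I P1(4) P2(4) by auto
    moreover have "snd C1 \<inter> snd C2 = {}" using J P1(4) P2(4) by auto
    moreover have "sub_union U W = sub_union (sub_union C1 C2) ({b}, {})"
      using P1(4) P2(4) e1 e2 True by (auto simp: sub_union_def)
    ultimately show ?thesis unfolding is_barbell_def using P1(2) P2(2) by blast
  next
    case False
    have d: "fst C1 \<inter> fst C2 = {}" using False I P1(4) P2(4) by auto
    have pr: "is_path ends y1 y2 (sub_union P1 P2)"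
      by (rule path_concat[OF path_rev[OF P1(1)] P2(1)]) (use I P1(4) P2(4) in auto)
    have "fst (sub_union P1 P2) \<inter> (fst C1 \<union> fst C2) = {y1, y2}"
    proof
      show "fst (sub_union P1 P2) \<inter> (fst C1 \<union> fst C2) \<subseteq> {y1, y2}"
      proof
        fix v assume v: "v \<in> fst (sub_union P1 P2) \<inter> (fst C1 \<union> fst C2)"
        show "v \<in> {y1, y2}"
        proof (cases "v \<in> fst P1")
          case True
          show ?thesis
          proof (cases "v \<in> fst C1")
            case True then show ?thesis using \<open>v \<in> fst P1\<close> P1(3) by auto
          next
            case False
            then have "v \<in> fst C2" using v by auto
            then have "v = b" using I True P1(4) P2(4) by auto
            then show ?thesis using b2 \<open>v \<in> fst C2\<close> P2(3) by auto
          qed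
        next
          case False
          then have vP2: "v \<in> fst P2" using v by auto
          show ?thesis
          proof (cases "v \<in> fst C2")
            case True then show ?thesis using vP2 P2(3) by auto
          next
            case False
            then have "v \<in> fst C1" using v by auto
            then have "v = b" using I vP2 P1(4) P2(4) by auto
            then show ?thesis using b1 \<open>v \<in> fst C1\<close> P1(3) by auto
          qed
        qed
      qed
    qed (use P1(3) P2(3) in auto)
    moreover have "y1 \<in> fst C1" "y2 \<in> fst C2" using P1(3) P2(3) by auto
    moreover have "sub_union U W = sub_union (sub_union C1 C2) (sub_union P1 P2)"
      using P1(4) P2(4) by (auto simp: sub_union_def)
    ultimately show ?thesis unfolding is_barbell_def using P1(2) P2(2) d pr by blast
  qed
qed

lemma loop_circuit:
  assumes "ends e = {v}" "sigma e = -1"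
  shows "unbalanced_circuit ends sigma ({v}, {e})"
proof -
  have "{e'\<in>{e}. v \<in> ends e' \<and> card (ends e') = 2} = {}" using assms by auto
  moreover have "{e'\<in>{e}. ends e' = {v}} = {e}" using assms by auto
  ultimately have "degree ends ({v}, {e}) v = 2" unfolding degree_def by simp
  moreover have "connected_sub ends ({v}, {e})" unfolding connected_sub_def by auto
  moreover have "{e'\<in>{e}. sigma e' = -1} = {e}" using assms by auto
  ultimately show ?thesis using assms unfolding unbalanced_circuit_def is_circuit_def by auto
qed

lemma loop_tadpole:
  assumes "ends e = {v}" "sigma e = -1"
  shows "tadpole_with ends sigma v ({v}, {e}) ({v}, {e})"
proof -
  have c: "unbalanced_circuit ends sigma ({v}, {e})" using loop_circuit assms by metis
  show ?thesis unfolding tadpole_with_def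
    by (rule exI[of _ v], rule exI[of _ "({v}, {})"]) (use path_triv c in \<open>auto simp: sub_union_def\<close>)
qed

lemma sgn_union: "finite (snd P) \<Longrightarrow> finite (snd R) \<Longrightarrow> snd P \<inter> snd R = {} \<Longrightarrow>
   sgn_of sigma (sub_union P R) = sgn_of sigma P * sgn_of sigma R"
  unfolding sgn_of_def by (simp add: prod.union_disjoint)

lemma sg_union: "subgraph_of ends A V E \<Longrightarrow> subgraph_of ends B V' E' \<Longrightarrow> subgraph_of ends (sub_union A B) (V \<union> V') (E \<union> E')"
  unfolding subgraph_of_def by auto

lemma sg_mono: "subgraph_of ends A V E \<Longrightarrow> V \<subseteq> V' \<Longrightarrow> E \<subseteq> E' \<Longrightarrow> subgraph_of ends A V' E'"
  unfolding subgraph_of_def by auto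

definition cnt :: "'e \<Rightarrow> ('v,'e) sub multiset \<Rightarrow> nat" where
  "cnt e M = size (filter_mset (\<lambda>S. e \<in> snd S) M)"

lemma cnt_simps[simp]: "cnt e {#} = 0" "cnt e (M + N) = cnt e M + cnt e N"
  "cnt e (add_mset S M) = of_bool (e \<in> snd S) + cnt e M"
  by (auto simp: cnt_def)

lemma cnt_zero: "(\<forall>S\<in>#M. e \<notin> snd S) \<Longrightarrow> cnt e M = 0"
  unfolding cnt_def by (simp add: filter_mset_eq_conv)

lemma size2: "size M = 2 \<Longrightarrow> \<exists>a b. M = {#a, b#}"
  proof -
  assume "size M = 2"
  then obtain a M' where "M = add_mset a M'" "size M' = 1"
    using size_eq_Suc_imp_eq_union[of M 1] by (auto simp: numeral_2_eq_2)
  then obtain b where "M' = {#b#}" using size_1_singleton_mset by (metis One_nat_def)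
  then show ?thesis using \<open>M = add_mset a M'\<close> by blast
qed




locale sdl =
  fixes ends :: "'e \<Rightarrow> 'v set" and sigma :: "'e \<Rightarrow> int"
    and V :: "'v set" and E :: "'e set" and n :: nat
    and x :: "nat \<Rightarrow> 'v" and H :: "nat \<Rightarrow> ('v,'e) sub"
  assumes G: "signed_graph ends sigma V E"
    and SD: "series_decomp ends sigma V E n x H"
begin

lemma n1: "n \<ge> 1" using SD unfolding series_decomp_def by blast
lemma Hsub: "i \<in> {1..n} \<Longrightarrow> subgraph_of ends (H i) V E" using SD unfolding series_decomp_def by blast
lemma Htt: "i \<in> {1..n} \<Longrightarrow> two_terminal ends sigma (H i) (x (i-1)) (x i)" using SD unfolding series_decomp_def by blast
lemma VU: "V = (\<Union>i\<in>{1..n}. fst (H i))" using SD unfolding series_decomp_def by blast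
lemma EU: "E = (\<Union>i\<in>{1..n}. snd (H i))" using SD unfolding series_decomp_def by blast
lemma Hdisj: "i \<in> {1..n} \<Longrightarrow> j \<in> {1..n} \<Longrightarrow> i \<noteq> j \<Longrightarrow> snd (H i) \<inter> snd (H j) = {} \<and> fst (H i) \<inter> fst (H j) \<subseteq> x ` {0..n}"
  using SD unfolding series_decomp_def by blast
lemma xin: "k \<in> {0..n} \<Longrightarrow> i \<in> {1..n} \<Longrightarrow> x k \<in> fst (H i) \<longleftrightarrow> (x k = x (i-1) \<or> x k = x i)"
  using SD unfolding series_decomp_def by blast
lemma xeq: "k < l \<Longrightarrow> l \<le> n \<Longrightarrow> x k = x l \<longleftrightarrow> (\<forall>m\<in>{k<..l}. x (m-1) = x m)"
  using SD unfolding series_decomp_def by blast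

lemma step_eq: "m \<le> k \<Longrightarrow> Suc k \<le> n \<Longrightarrow> x m = x (Suc k) \<Longrightarrow> x k = x (Suc k)"
proof -
  assume a: "m \<le> k" "Suc k \<le> n" "x m = x (Suc k)"
  have "Suc k \<in> {m<..Suc k}" using a by auto
  then show ?thesis using xeq[of m "Suc k"] a by fastforce
qed

lemma Hfin: "i \<in> {1..n} \<Longrightarrow> finite (snd (H i))"
  using Hsub G unfolding subgraph_of_def signed_graph_def by (meson finite_subset)

lemma Hends: "i \<in> {1..n} \<Longrightarrow> e \<in> snd (H i) \<Longrightarrow> ends e \<subseteq> fst (H i)"
  using Hsub unfolding subgraph_of_def by blast

definition Vk :: "nat \<Rightarrow> 'v set" where "Vk k = insert (x 0) (\<Union>i\<in>{1..k}. fst (H i))"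
definition Ek :: "nat \<Rightarrow> 'e set" where "Ek k = (\<Union>i\<in>{1..k}. snd (H i))"

lemma Vk_Suc: "Vk (Suc k) = Vk k \<union> fst (H (Suc k))"
  unfolding Vk_def by (auto simp: atLeastAtMostSuc_conv)
lemma Ek_Suc: "Ek (Suc k) = Ek k \<union> snd (H (Suc k))"
  unfolding Ek_def by (auto simp: atLeastAtMostSuc_conv)
lemma Ek0: "Ek 0 = {}" unfolding Ek_def by auto
lemma Vk0: "Vk 0 = {x 0}" unfolding Vk_def by auto

lemma x0V: "x 0 \<in> fst (H 1)"
  using Htt[of 1] n1 unfolding two_terminal_def by auto

lemma Vk_sub: "k \<le> n \<Longrightarrow> Vk k \<subseteq> V"
  unfolding Vk_def using VU x0V n1 by auto
lemma Ek_sub: "k \<le> n \<Longrightarrow> Ek k \<subseteq> E"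
  unfolding Ek_def using EU by auto
lemma Vk_n: "Vk n = V" unfolding Vk_def using VU x0V n1 by auto
lemma Ek_n: "Ek n = E" unfolding Ek_def using EU by auto

lemma xk_Vk: "k \<le> n \<Longrightarrow> x k \<in> Vk k"
proof (cases k)
  case (Suc j)
  assume "k \<le> n"
  then have "x k \<in> fst (H k)" using Htt[of k] Suc unfolding two_terminal_def by auto
  then show ?thesis unfolding Vk_def using Suc by auto
qed (simp add: Vk_def)

lemma xk_H: "Suc k \<le> n \<Longrightarrow> x k \<in> fst (H (Suc k)) \<and> x (Suc k) \<in> fst (H (Suc k))"
  using Htt[of "Suc k"] unfolding two_terminal_def by auto

lemma VH: assumes "Suc k \<le> n" shows "Vk k \<inter> fst (H (Suc k)) \<subseteq> {x k}"
proof
  fix v assume v: "v \<in> Vk k \<inter> fst (H (Suc k))"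
  show "v \<in> {x k}"
  proof (cases "v = x 0")
    case True
    then have "x 0 = x k \<or> x 0 = x (Suc k)" using xin[of 0 "Suc k"] v assms by auto
    then show ?thesis using step_eq[of 0 k] assms True by auto
  next
    case False
    then obtain i where i: "i \<in> {1..k}" "v \<in> fst (H i)" using v unfolding Vk_def by auto
    then have "v \<in> x ` {0..n}" using Hdisj[of i "Suc k"] v assms by auto
    then obtain j where j: "j \<le> n" "v = x j" by auto
    have "x j = x k \<or> x j = x (Suc k)" using xin[of j "Suc k"] v j assms by auto
    moreover have "x j = x (i-1) \<or> x j = x i" using xin[of j i] i j assms by auto
    ultimately show ?thesis using step_eq[of "i-1" k] step_eq[of i k] i assms j by auto
  qed
qed

lemma EH: assumes "Suc k \<le> n" shows "Ek k \<inter> snd (H (Suc k)) = {}"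
  unfolding Ek_def using Hdisj[of _ "Suc k"] assms by fastforce

lemma Hsg: "i \<in> {1..k} \<Longrightarrow> k \<le> n \<Longrightarrow> subgraph_of ends (H i) (Vk k) (Ek k)"
  unfolding subgraph_of_def Vk_def Ek_def using Hends[of i] by auto

lemma Hsg_self: "i \<in> {1..n} \<Longrightarrow> subgraph_of ends (H i) (fst (H i)) (snd (H i))"
  unfolding subgraph_of_def using Hends[of i] by auto

lemma card2: "finite A \<Longrightarrow> card A \<le> 2 \<Longrightarrow> a \<noteq> b \<Longrightarrow> a \<in> A \<Longrightarrow> b \<in> A \<Longrightarrow> A = {a, b}"
  by (metis card_2_iff card_seteq empty_subsetI insert_subset)

lemma type0:
  assumes "Suc k \<le> n" "x k = x (Suc k)"
  shows "\<exists>e. H (Suc k) = ({x k}, {e}) \<and> ends e = {x k} \<and> sigma e = -1"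
proof -
  have t: "two_terminal ends sigma (H (Suc k)) (x k) (x (Suc k))" using Htt[of "Suc k"] assms by auto
  then obtain v e where "H (Suc k) = ({v}, {e})" "ends e = {v}" "sigma e = -1"
    using assms unfolding two_terminal_def single_negative_loop_def by auto
  moreover have "x k \<in> fst (H (Suc k))" using t unfolding two_terminal_def by auto
  ultimately show ?thesis by auto
qed

lemma type1:
  assumes "Suc k \<le> n" "x k \<noteq> x (Suc k)" "\<not> card (snd (H (Suc k))) \<ge> 2"
  shows "\<exists>e. snd (H (Suc k)) = {e} \<and> ends e = {x k, x (Suc k)} \<and> (sigma e = 1 \<or> sigma e = -1)"
proof -
  have t: "two_terminal ends sigma (H (Suc k)) (x k) (x (Suc k))" using Htt[of "Suc k"] assms by auto
  have fin: "finite (snd (H (Suc k)))" using Hfin assms by auto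
  moreover have ne: "snd (H (Suc k)) \<noteq> {}" using t unfolding two_terminal_def by auto
  ultimately have "card (snd (H (Suc k))) = 1" using assms(3) card_0_eq[OF fin] by linarith
  then obtain e where e: "snd (H (Suc k)) = {e}" by (meson card_1_singletonE)
  have eE: "e \<in> E" using Hsub[of "Suc k"] assms e unfolding subgraph_of_def by auto
  have c: "(\<lambda>a b. \<exists>e'\<in>{e}. a \<in> ends e' \<and> b \<in> ends e')\<^sup>*\<^sup>* (x k) (x (Suc k))"
    using t e unfolding two_terminal_def connected_sub_def by auto
  have a1: "x k \<in> ends e"
    using c assms(2) by (cases rule: converse_rtranclpE) auto
  have a2: "x (Suc k) \<in> ends e"
    using c assms(2) by (cases rule: rtranclp.cases) auto
  have "card (ends e) = 1 \<or> card (ends e) = 2" "sigma e = 1 \<or> sigma e = -1"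
    using G eE unfolding signed_graph_def by auto
  moreover then have "finite (ends e)" by (metis card.infinite zero_neq_numeral zero_neq_one)
  ultimately have "ends e = {x k, x (Suc k)}" using card2 a1 a2 assms(2) by (metis nat_le_linear one_le_numeral order_trans)
  then show ?thesis using e \<open>sigma e = 1 \<or> sigma e = -1\<close> by auto
qed

end




context sdl begin

definition isU :: "nat \<Rightarrow> bool" where "isU i \<longleftrightarrow> x (i-1) = x i \<or> card (snd (H i)) \<ge> 2"
definition Uk :: "nat \<Rightarrow> nat set" where "Uk k = {i\<in>{1..k}. isU i}"
definition Bk :: "nat \<Rightarrow> nat set" where "Bk k = {i\<in>{1..k}. x (i-1) \<noteq> x i \<and> card (snd (H i)) \<ge> 2}"
definition L0 :: "nat \<Rightarrow> nat set" where "L0 k = {i\<in>{1..k}. x (i-1) = x i}"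
definition M0 :: "nat \<Rightarrow> ('v,'e) sub multiset" where "M0 k = image_mset H (mset_set (L0 k))"

definition tot where "tot k F0 PM T1 T2 U1 U2 = F0 + (M0 k + M0 k) + PM + {#T1, T2, U1, U2#}"

definition st :: "nat \<Rightarrow> ('v,'e) sub multiset \<Rightarrow> ('v,'e) sub multiset \<Rightarrow> ('v,'e) sub \<Rightarrow> ('v,'e) sub
   \<Rightarrow> ('v,'e) sub \<Rightarrow> ('v,'e) sub \<Rightarrow> bool" where
  "st k F0 PM T1 T2 U1 U2 \<longleftrightarrow>
     (\<forall>S\<in>#tot k F0 PM T1 T2 U1 U2. subgraph_of ends S (Vk k) (Ek k)) \<and>
     (\<forall>e\<in>Ek k. cnt e (tot k F0 PM T1 T2 U1 U2) = 6) \<and>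
     (\<forall>Z\<in>#F0. signed_circuit ends sigma Z) \<and>
     (\<forall>P\<in>#PM. is_path ends (x 0) (x k) P) \<and>
     (\<forall>T\<in>{T1, T2}. \<exists>C. tadpole_with ends sigma (x 0) T C \<and>
          fst C \<subseteq> fst (H (Min (Uk k))) \<and> snd C \<subseteq> snd (H (Min (Uk k)))) \<and>
     (\<forall>T\<in>{U1, U2}. \<exists>C. tadpole_with ends sigma (x k) T C \<and>
          fst C \<subseteq> fst (H (Max (Uk k))) \<and> snd C \<subseteq> snd (H (Max (Uk k))))"

definition good :: "nat \<Rightarrow> int list \<Rightarrow> bool" where
  "good k \<theta> \<longleftrightarrow> (\<exists>F0 P1 P2 P3 P4 T1 T2 U1 U2. st k F0 {#P1, P2, P3, P4#} T1 T2 U1 U2 \<and>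
      \<theta> = [sgn_of sigma P1, sgn_of sigma P2, sgn_of sigma P3, sgn_of sigma P4])"

definition claim0 :: "nat \<Rightarrow> bool" where
  "claim0 k \<longleftrightarrow> (\<exists>Q. is_path ends (x 0) (x k) Q \<and> subgraph_of ends Q (Vk k) (Ek k) \<and> snd Q = Ek k)"

lemma Uk_Suc: "Uk (Suc k) = Uk k \<union> (if isU (Suc k) then {Suc k} else {})"
  unfolding Uk_def by (auto simp: atLeastAtMostSuc_conv)
lemma L0_Suc: "L0 (Suc k) = L0 k \<union> (if x k = x (Suc k) then {Suc k} else {})"
  unfolding L0_def by (auto simp: atLeastAtMostSuc_conv)
lemma Uk_fin: "finite (Uk k)" unfolding Uk_def by auto
lemma L0_fin: "finite (L0 k)" unfolding L0_def by auto

lemma M0_nl: "x k \<noteq> x (Suc k) \<Longrightarrow> M0 (Suc k) = M0 k"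
  unfolding M0_def using L0_Suc[of k] by simp
lemma M0_l: "x k = x (Suc k) \<Longrightarrow> M0 (Suc k) = add_mset (H (Suc k)) (M0 k)"
proof -
  assume "x k = x (Suc k)"
  moreover have "Suc k \<notin> L0 k" unfolding L0_def by auto
  ultimately show ?thesis unfolding M0_def using L0_Suc[of k] L0_fin[of k] by simp
qed
lemma M0_0: "Uk k = {} \<Longrightarrow> M0 k = {#}"
proof -
  assume "Uk k = {}"
  then have "L0 k = {}" unfolding L0_def Uk_def isU_def by auto
  then show ?thesis unfolding M0_def by simp
qed

lemma M0_sg: "k \<le> n \<Longrightarrow> S \<in># M0 k \<Longrightarrow> subgraph_of ends S (Vk k) (Ek k)"
  unfolding M0_def L0_def using Hsg by auto

lemma MinMax_ins: "Uk k \<noteq> {} \<Longrightarrow> isU (Suc k) \<Longrightarrow> Min (Uk (Suc k)) = Min (Uk k) \<and> Max (Uk (Suc k)) = Suc k"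
proof -
  assume a: "Uk k \<noteq> {}" "isU (Suc k)"
  have u: "Uk (Suc k) = insert (Suc k) (Uk k)" using a Uk_Suc[of k] by auto
  have le: "\<forall>i\<in>Uk k. i \<le> k" unfolding Uk_def by auto
  have "Min (Uk k) \<le> k" using le a Uk_fin Min_in by blast
  moreover have "Max (Uk k) \<le> k" using le a Uk_fin Max_in by blast
  moreover have "Min (Uk (Suc k)) = min (Suc k) (Min (Uk k))" "Max (Uk (Suc k)) = max (Suc k) (Max (Uk k))"
    using u Uk_fin[of k] a by simp_all
  ultimately show ?thesis by simp
qed

lemma xs_notin: "Suc k \<le> n \<Longrightarrow> x k \<noteq> x (Suc k) \<Longrightarrow> x (Suc k) \<notin> Vk k"
  using VH[of k] xk_H[of k] by auto

lemma tot_sg: "st k F0 PM T1 T2 U1 U2 \<Longrightarrow> S \<in># tot k F0 PM T1 T2 U1 U2 \<Longrightarrow> fst S \<subseteq> Vk k \<and> snd S \<subseteq> Ek k"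
  unfolding st_def subgraph_of_def by blast

end



context sdl begin

lemma S_B1:
  assumes k: "Suc k \<le> n" and nu: "\<not> isU (Suc k)"
    and e: "snd (H (Suc k)) = {e}" "ends e = {x k, x (Suc k)}" and xne: "x k \<noteq> x (Suc k)"
    and s: "st k F0 {#P1, P2, P3, P4#} T1 T2 U1 U2"
    and Ee: "Ee = ({x k, x (Suc k)}, {e})"
  shows "st (Suc k) F0 {#sub_union P1 Ee, sub_union P2 Ee, sub_union P3 Ee, sub_union P4 Ee#} T1 T2
            (sub_union Ee U1) (sub_union Ee U2)"
proof -
  let ?t = "tot k F0 {#P1, P2, P3, P4#} T1 T2 U1 U2"
  have Uk: "Uk (Suc k) = Uk k" using Uk_Suc[of k] nu by simp
  have M0: "M0 (Suc k) = M0 k" using M0_nl xne by simp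
  have xs: "x (Suc k) \<notin> Vk k" using xs_notin k xne by simp
  have eE: "e \<notin> Ek k" using EH[OF k] e by auto
  have xkV: "x k \<in> Vk k" using xk_Vk k by simp
  have pre: "\<And>S. S \<in># ?t \<Longrightarrow> fst S \<subseteq> Vk k \<and> snd S \<subseteq> Ek k" using tot_sg s by blast
  have Eesg: "subgraph_of ends Ee (Vk (Suc k)) (Ek (Suc k))"
    using Ee e xk_H[OF k] unfolding subgraph_of_def Vk_Suc Ek_Suc by auto
  have Eep1: "is_path ends (x k) (x (Suc k)) Ee" using edge_path[of ends e "x k" "x (Suc k)"] e(2) xne Ee by simp
  have Eep2: "is_path ends (x (Suc k)) (x k) Ee" using edge_path[of ends e "x (Suc k)" "x k"] e(2) xne Ee
    by (simp add: insert_commute)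
  have sgmono: "\<And>S. S \<in># ?t \<Longrightarrow> subgraph_of ends S (Vk (Suc k)) (Ek (Suc k))"
    using s unfolding st_def Vk_Suc Ek_Suc by (meson Un_upper1 sg_mono)
  have sgU: "\<And>S. S \<in># ?t \<Longrightarrow> subgraph_of ends (sub_union S Ee) (Vk (Suc k)) (Ek (Suc k))"
    using sgmono Eesg sg_union by (metis Un_absorb)
  have sgU': "\<And>S. S \<in># ?t \<Longrightarrow> subgraph_of ends (sub_union Ee S) (Vk (Suc k)) (Ek (Suc k))"
    using sgmono Eesg sg_union by (metis Un_absorb)
  have inter: "\<And>S. S \<in># ?t \<Longrightarrow> fst S \<inter> fst Ee \<subseteq> {x k}" using pre xs Ee by auto
  note defs = st_def tot_def
  show ?thesis unfolding st_def
  proof (intro conjI)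
    show "\<forall>S\<in>#tot (Suc k) F0 {#sub_union P1 Ee, sub_union P2 Ee, sub_union P3 Ee, sub_union P4 Ee#} T1 T2
            (sub_union Ee U1) (sub_union Ee U2). subgraph_of ends S (Vk (Suc k)) (Ek (Suc k))"
      unfolding tot_def M0 using sgmono sgU sgU' unfolding tot_def by auto
  next
    show "\<forall>e'\<in>Ek (Suc k). cnt e' (tot (Suc k) F0 {#sub_union P1 Ee, sub_union P2 Ee, sub_union P3 Ee, sub_union P4 Ee#} T1 T2
            (sub_union Ee U1) (sub_union Ee U2)) = 6"
    proof
      fix e' assume e': "e' \<in> Ek (Suc k)"
      show "cnt e' (tot (Suc k) F0 {#sub_union P1 Ee, sub_union P2 Ee, sub_union P3 Ee, sub_union P4 Ee#} T1 T2
            (sub_union Ee U1) (sub_union Ee U2)) = 6"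
      proof (cases "e' = e")
        case True
        have z: "\<And>S. S \<in># ?t \<Longrightarrow> e \<notin> snd S" using pre eE by blast
        have "cnt e F0 = 0" "cnt e (M0 k) = 0" using z unfolding tot_def by (auto intro!: cnt_zero)
        moreover have "e \<notin> snd P1" "e \<notin> snd P2" "e \<notin> snd P3" "e \<notin> snd P4"
           "e \<notin> snd T1" "e \<notin> snd T2" "e \<notin> snd U1" "e \<notin> snd U2" using z unfolding tot_def by auto
        ultimately show ?thesis using True Ee unfolding tot_def M0 by simp
      next
        case False
        then have e'k: "e' \<in> Ek k" using e' e unfolding Ek_Suc by auto
        have "cnt e' ?t = 6" using s e'k unfolding st_def by blast
        then show ?thesis using False Ee unfolding tot_def M0 by simp
      qed
    qed
  next
    show "\<forall>Z\<in>#F0. signed_circuit ends sigma Z" using s unfolding st_def by blast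
  next
    have "\<And>P. P \<in># {#P1, P2, P3, P4#} \<Longrightarrow> is_path ends (x 0) (x (Suc k)) (sub_union P Ee)"
    proof -
      fix P assume P: "P \<in># {#P1, P2, P3, P4#}"
      have "is_path ends (x 0) (x k) P" using s P unfolding st_def by blast
      moreover have "P \<in># ?t" using P unfolding tot_def by auto
      ultimately show "is_path ends (x 0) (x (Suc k)) (sub_union P Ee)"
        using path_concat[OF _ Eep1] inter by blast
    qed
    then show "\<forall>P\<in>#{#sub_union P1 Ee, sub_union P2 Ee, sub_union P3 Ee, sub_union P4 Ee#}. is_path ends (x 0) (x (Suc k)) P"
      by auto
  next
    show "\<forall>T\<in>{T1, T2}. \<exists>C. tadpole_with ends sigma (x 0) T C \<and>
          fst C \<subseteq> fst (H (Min (Uk (Suc k)))) \<and> snd C \<subseteq> snd (H (Min (Uk (Suc k))))"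
      using s unfolding st_def Uk by blast
  next
    have "\<And>U. U \<in> {U1, U2} \<Longrightarrow> \<exists>C. tadpole_with ends sigma (x (Suc k)) (sub_union Ee U) C \<and>
          fst C \<subseteq> fst (H (Max (Uk (Suc k)))) \<and> snd C \<subseteq> snd (H (Max (Uk (Suc k))))"
    proof -
      fix U assume U: "U \<in> {U1, U2}"
      obtain C where C: "tadpole_with ends sigma (x k) U C" "fst C \<subseteq> fst (H (Max (Uk k)))" "snd C \<subseteq> snd (H (Max (Uk k)))"
        using s U unfolding st_def by blast
      have "U \<in># ?t" using U unfolding tot_def by auto
      then have "fst Ee \<inter> fst U \<subseteq> {x k}" using inter by blast
      then have "tadpole_with ends sigma (x (Suc k)) (sub_union Ee U) C"
        using tadpole_prepend[OF Eep2 C(1)] by blast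
      then show "?thesis U" unfolding Uk using C(2,3) by blast
    qed
    then show "\<forall>T\<in>{sub_union Ee U1, sub_union Ee U2}. \<exists>C. tadpole_with ends sigma (x (Suc k)) T C \<and>
          fst C \<subseteq> fst (H (Max (Uk (Suc k)))) \<and> snd C \<subseteq> snd (H (Max (Uk (Suc k))))" by blast
  qed
qed

end



context sdl begin

lemma S_B1_0:
  assumes k: "Suc k \<le> n"
    and e: "snd (H (Suc k)) = {e}" "ends e = {x k, x (Suc k)}" and xne: "x k \<noteq> x (Suc k)"
    and c: "claim0 k"
  shows "claim0 (Suc k)"
proof -
  obtain Q where Q: "is_path ends (x 0) (x k) Q" "subgraph_of ends Q (Vk k) (Ek k)" "snd Q = Ek k"
    using c unfolding claim0_def by blast
  define Ee where "Ee = ({x k, x (Suc k)}, {e})"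
  have xs: "x (Suc k) \<notin> Vk k" using xs_notin k xne by simp
  have Eesg: "subgraph_of ends Ee (fst (H (Suc k))) (snd (H (Suc k)))"
    using Ee_def e xk_H[OF k] unfolding subgraph_of_def by auto
  have Eep1: "is_path ends (x k) (x (Suc k)) Ee" using edge_path[of ends e "x k" "x (Suc k)"] e(2) xne Ee_def by simp
  have "fst Q \<inter> fst Ee \<subseteq> {x k}" using Q(2) xs Ee_def unfolding subgraph_of_def by auto
  then have "is_path ends (x 0) (x (Suc k)) (sub_union Q Ee)" using path_concat[OF Q(1) Eep1] by blast
  moreover have "subgraph_of ends (sub_union Q Ee) (Vk (Suc k)) (Ek (Suc k))"
    unfolding Vk_Suc Ek_Suc by (rule sg_union[OF Q(2) Eesg])
  moreover have "snd (sub_union Q Ee) = Ek (Suc k)" using Q(3) e Ee_def Ek_Suc by simp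
  ultimately show ?thesis unfolding claim0_def by blast
qed

lemma loop_sg: "Suc k \<le> n \<Longrightarrow> subgraph_of ends (H (Suc k)) (Vk (Suc k)) (Ek (Suc k))"
  using Hsg[of "Suc k" "Suc k"] by simp

lemma S_B0_0:
  assumes k: "Suc k \<le> n" and u: "Uk k = {}" and xe: "x k = x (Suc k)"
    and L: "H (Suc k) = ({x k}, {e})" "ends e = {x k}" "sigma e = -1"
    and c: "claim0 k"
  shows "\<exists>Q. st (Suc k) {#} {#Q, Q, Q, Q#} (sub_union Q (H (Suc k))) (sub_union Q (H (Suc k)))
             (H (Suc k)) (H (Suc k)) \<and> is_path ends (x 0) (x k) Q"
proof -
  obtain Q where Q: "is_path ends (x 0) (x k) Q" "subgraph_of ends Q (Vk k) (Ek k)" "snd Q = Ek k"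
    using c unfolding claim0_def by blast
  let ?L = "H (Suc k)"
  have isu: "isU (Suc k)" using xe unfolding isU_def by simp
  have Uk1: "Uk (Suc k) = {Suc k}" using Uk_Suc[of k] u isu by simp
  have M0: "M0 (Suc k) = {#?L#}" using M0_l[OF xe] M0_0[OF u] by simp
  have eE: "e \<notin> Ek k" using EH[OF k] L by auto
  have xkV: "x k \<in> Vk k" using xk_Vk k by simp
  have Lt: "tadpole_with ends sigma (x k) ?L ?L" using loop_tadpole[of ends e "x k" sigma] L by simp
  have QL: "tadpole_with ends sigma (x 0) (sub_union Q ?L) ?L"
    by (rule tadpole_prepend[OF Q(1) Lt]) (use L in auto)
  have Lsg: "subgraph_of ends ?L (Vk (Suc k)) (Ek (Suc k))" using loop_sg k by simp
  have Qsg: "subgraph_of ends Q (Vk (Suc k)) (Ek (Suc k))"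
    using Q(2) unfolding Vk_Suc Ek_Suc by (meson Un_upper1 sg_mono)
  have QLsg: "subgraph_of ends (sub_union Q ?L) (Vk (Suc k)) (Ek (Suc k))"
    using sg_union[OF Qsg Lsg] by simp
  have Qp: "is_path ends (x 0) (x (Suc k)) Q" using Q(1) xe by simp
  show ?thesis
    unfolding st_def
  proof (intro exI conjI)
    show "\<forall>S\<in>#tot (Suc k) {#} {#Q, Q, Q, Q#} (sub_union Q ?L) (sub_union Q ?L) ?L ?L.
           subgraph_of ends S (Vk (Suc k)) (Ek (Suc k))"
      unfolding tot_def M0 using Lsg Qsg QLsg by auto
    show "\<forall>e'\<in>Ek (Suc k). cnt e' (tot (Suc k) {#} {#Q, Q, Q, Q#} (sub_union Q ?L) (sub_union Q ?L) ?L ?L) = 6"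
    proof
      fix e' assume "e' \<in> Ek (Suc k)"
      then have "e' = e \<or> e' \<in> Ek k" unfolding Ek_Suc using L by auto
      then show "cnt e' (tot (Suc k) {#} {#Q, Q, Q, Q#} (sub_union Q ?L) (sub_union Q ?L) ?L ?L) = 6"
        using eE Q(3) L(1) unfolding tot_def M0 by auto
    qed
    have t1: "\<exists>C. tadpole_with ends sigma (x 0) (sub_union Q ?L) C \<and> fst C \<subseteq> fst (H (Min (Uk (Suc k)))) \<and> snd C \<subseteq> snd (H (Min (Uk (Suc k))))"
      using QL unfolding Uk1 by (intro exI[of _ ?L]) simp
    have t2: "\<exists>C. tadpole_with ends sigma (x (Suc k)) ?L C \<and> fst C \<subseteq> fst (H (Max (Uk (Suc k)))) \<and> snd C \<subseteq> snd (H (Max (Uk (Suc k))))"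
      using Lt xe unfolding Uk1 by (intro exI[of _ ?L]) simp
    show "\<forall>T\<in>{sub_union Q ?L, sub_union Q ?L}. \<exists>C. tadpole_with ends sigma (x 0) T C \<and> fst C \<subseteq> fst (H (Min (Uk (Suc k)))) \<and> snd C \<subseteq> snd (H (Min (Uk (Suc k))))"
      using t1 by simp
    show "\<forall>T\<in>{?L, ?L}. \<exists>C. tadpole_with ends sigma (x (Suc k)) T C \<and> fst C \<subseteq> fst (H (Max (Uk (Suc k)))) \<and> snd C \<subseteq> snd (H (Max (Uk (Suc k))))"
      using t2 by simp
  qed (use Qp Q(1) in simp_all)
qed

lemma S_B0:
  assumes k: "Suc k \<le> n" and u: "Uk k \<noteq> {}" and xe: "x k = x (Suc k)"
    and L: "H (Suc k) = ({x k}, {e})" "ends e = {x k}" "sigma e = -1"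
    and s: "st k F0 PM T1 T2 U1 U2"
  shows "st (Suc k) (F0 + {#sub_union U1 (H (Suc k)), sub_union U2 (H (Suc k))#}) PM T1 T2
             (H (Suc k)) (H (Suc k))"
proof -
  let ?L = "H (Suc k)"
  let ?t = "tot k F0 PM T1 T2 U1 U2"
  have isu: "isU (Suc k)" using xe unfolding isU_def by simp
  have MM: "Min (Uk (Suc k)) = Min (Uk k)" "Max (Uk (Suc k)) = Suc k" using MinMax_ins[OF u isu] by auto
  have M0: "M0 (Suc k) = add_mset ?L (M0 k)" using M0_l[OF xe] by simp
  have eE: "e \<notin> Ek k" using EH[OF k] L by auto
  have pre: "\<And>S. S \<in># ?t \<Longrightarrow> fst S \<subseteq> Vk k \<and> snd S \<subseteq> Ek k" using tot_sg s by blast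
  have Lt: "tadpole_with ends sigma (x k) ?L ?L" using loop_tadpole[of ends e "x k" sigma] L by simp
  have Lsg: "subgraph_of ends ?L (Vk (Suc k)) (Ek (Suc k))" using loop_sg k by simp
  have sgmono: "\<And>S. S \<in># ?t \<Longrightarrow> subgraph_of ends S (Vk (Suc k)) (Ek (Suc k))"
    using s unfolding st_def Vk_Suc Ek_Suc by (meson Un_upper1 sg_mono)
  have sgU: "\<And>S. S \<in># ?t \<Longrightarrow> subgraph_of ends (sub_union S ?L) (Vk (Suc k)) (Ek (Suc k))"
    using sgmono Lsg sg_union by (metis Un_absorb)
  have U12: "U1 \<in># ?t" "U2 \<in># ?t" unfolding tot_def by auto
  have bar: "\<And>U. U \<in># ?t \<Longrightarrow> U \<in> {U1, U2} \<Longrightarrow> signed_circuit ends sigma (sub_union U ?L)"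
  proof -
    fix U assume U: "U \<in># ?t" "U \<in> {U1, U2}"
    obtain C where C: "tadpole_with ends sigma (x k) U C" using s U(2) unfolding st_def by blast
    have "is_barbell ends sigma (sub_union U ?L)"
      by (rule barbell_join[OF C Lt]) (use pre[OF U(1)] eE L in auto)
    then show "signed_circuit ends sigma (sub_union U ?L)" unfolding signed_circuit_def by simp
  qed
  have nU: "e \<notin> snd U1" "e \<notin> snd U2" using pre[OF U12(1)] pre[OF U12(2)] eE by auto
  show ?thesis
    unfolding st_def
  proof (intro conjI)
    show "\<forall>S\<in>#tot (Suc k) (F0 + {#sub_union U1 ?L, sub_union U2 ?L#}) PM T1 T2 ?L ?L.
           subgraph_of ends S (Vk (Suc k)) (Ek (Suc k))"
      unfolding tot_def M0 using sgmono sgU U12 Lsg unfolding tot_def by auto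
    show "\<forall>e'\<in>Ek (Suc k). cnt e' (tot (Suc k) (F0 + {#sub_union U1 ?L, sub_union U2 ?L#}) PM T1 T2 ?L ?L) = 6"
    proof
      fix e' assume e': "e' \<in> Ek (Suc k)"
      show "cnt e' (tot (Suc k) (F0 + {#sub_union U1 ?L, sub_union U2 ?L#}) PM T1 T2 ?L ?L) = 6"
      proof (cases "e' = e")
        case True
        have z: "\<And>S. S \<in># ?t \<Longrightarrow> e \<notin> snd S" using pre eE by blast
        have "cnt e F0 = 0" "cnt e (M0 k) = 0" "cnt e PM = 0" using z unfolding tot_def by (auto intro!: cnt_zero)
        moreover have "e \<notin> snd T1" "e \<notin> snd T2" using z unfolding tot_def by auto
        ultimately show ?thesis using True L nU unfolding tot_def M0 by simp
      next
        case False
        then have e'k: "e' \<in> Ek k" using e' L unfolding Ek_Suc by auto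
        have "cnt e' ?t = 6" using s e'k unfolding st_def by blast
        then show ?thesis using False L unfolding tot_def M0 by simp
      qed
    qed
    show "\<forall>Z\<in>#F0 + {#sub_union U1 ?L, sub_union U2 ?L#}. signed_circuit ends sigma Z"
      using s bar U12 unfolding st_def by auto
    show "\<forall>P\<in>#PM. is_path ends (x 0) (x (Suc k)) P" using s xe unfolding st_def by simp
    show "\<forall>T\<in>{T1, T2}. \<exists>C. tadpole_with ends sigma (x 0) T C \<and>
          fst C \<subseteq> fst (H (Min (Uk (Suc k)))) \<and> snd C \<subseteq> snd (H (Min (Uk (Suc k))))"
      using s unfolding st_def MM by blast
    show "\<forall>T\<in>{?L, ?L}. \<exists>C. tadpole_with ends sigma (x (Suc k)) T C \<and>
          fst C \<subseteq> fst (H (Max (Uk (Suc k)))) \<and> snd C \<subseteq> snd (H (Max (Uk (Suc k))))"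
      using Lt xe MM by (intro ballI exI[of _ ?L]) auto
  qed
qed

end



context sdl begin

definition psiD where
  "psiD k a1 a2 b1 b2 c1 c2 d1 d2 S \<longleftrightarrow>
     six_cover ends (fst (H (Suc k))) (snd (H (Suc k))) ({#a1, a2#} + {#b1, b2#} + {#c1, c2#} + {#d1, d2#} + S) \<and>
     (\<forall>P\<in>{a1, a2}. is_path ends (x k) (x (Suc k)) P \<and> sgn_of sigma P = 1) \<and>
     (\<forall>P\<in>{b1, b2}. is_path ends (x k) (x (Suc k)) P \<and> sgn_of sigma P = -1) \<and>
     (\<forall>T\<in>{c1, c2}. tadpole ends sigma (x k) T) \<and>
     (\<forall>T\<in>{d1, d2}. tadpole ends sigma (x (Suc k)) T) \<and>
     (\<forall>Z\<in>#S. signed_circuit ends sigma Z)"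

lemma psi_get:
  assumes k: "Suc k \<le> n" and p: "psi_cover ends sigma (fst (H (Suc k))) (snd (H (Suc k))) (x k) (x (Suc k)) 2 F"
  shows "\<exists>a1 a2 b1 b2 c1 c2 d1 d2 S. psiD k a1 a2 b1 b2 c1 c2 d1 d2 S"
proof -
  obtain A B C D S where F: "six_cover ends (fst (H (Suc k))) (snd (H (Suc k))) F" "F = A + B + C + D + S"
    "size A = 2" "size B = 2" "size C = 2" "size D = 6 - 2 * 2"
    "\<forall>P\<in>#A. is_path ends (x k) (x (Suc k)) P \<and> sgn_of sigma P = 1"
    "\<forall>P\<in>#B. is_path ends (x k) (x (Suc k)) P \<and> sgn_of sigma P = -1"
    "\<forall>T\<in>#C. tadpole ends sigma (x k) T" "\<forall>T\<in>#D. tadpole ends sigma (x (Suc k)) T"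
    "\<forall>Z\<in>#S. signed_circuit ends sigma Z"
    using p unfolding psi_cover_def by blast
  obtain a1 a2 where A: "A = {#a1, a2#}" using size2 F(3) by blast
  obtain b1 b2 where B: "B = {#b1, b2#}" using size2 F(4) by blast
  obtain c1 c2 where C: "C = {#c1, c2#}" using size2 F(5) by blast
  have sD: "size D = 2" using F(6) by simp
  obtain d1 d2 where D: "D = {#d1, d2#}" using size2 sD by blast
  have "psiD k a1 a2 b1 b2 c1 c2 d1 d2 S" unfolding psiD_def
  proof (intro conjI)
    show "six_cover ends (fst (H (Suc k))) (snd (H (Suc k))) ({#a1, a2#} + {#b1, b2#} + {#c1, c2#} + {#d1, d2#} + S)"
      using F(1) unfolding F(2) A B C D .
  qed (use F(7) F(8) F(9) F(10) F(11) in \<open>simp_all add: A B C D\<close>)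
  then show ?thesis by blast
qed

lemma psi_sg: "psiD k a1 a2 b1 b2 c1 c2 d1 d2 S \<Longrightarrow> Y \<in># ({#a1, a2#} + {#b1, b2#} + {#c1, c2#} + {#d1, d2#} + S) \<Longrightarrow>
   subgraph_of ends Y (fst (H (Suc k))) (snd (H (Suc k)))"
  unfolding psiD_def six_cover_def by blast

lemma psi_cov: "psiD k a1 a2 b1 b2 c1 c2 d1 d2 S \<Longrightarrow> e \<in> snd (H (Suc k)) \<Longrightarrow>
   cnt e ({#a1, a2#} + {#b1, b2#} + {#c1, c2#} + {#d1, d2#} + S) = 6"
  unfolding psiD_def six_cover_def cnt_def by blast

lemma tad_sub: "tadpole_with ends sigma v T C \<Longrightarrow> subgraph_of ends T A B \<Longrightarrow> fst C \<subseteq> A \<and> snd C \<subseteq> B"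
proof -
  assume t: "tadpole_with ends sigma v T C" and g: "subgraph_of ends T A B"
  have "fst C \<subseteq> fst T \<and> snd C \<subseteq> snd T" using tadpole_basic[OF t] by blast
  moreover have "fst T \<subseteq> A \<and> snd T \<subseteq> B" using g unfolding subgraph_of_def by blast
  ultimately show ?thesis by blast
qed

lemma S_B2:
  assumes k: "Suc k \<le> n" and u: "Uk k \<noteq> {}" and xne: "x k \<noteq> x (Suc k)" and c2: "card (snd (H (Suc k))) \<ge> 2"
    and ps: "psiD k a1 a2 b1 b2 c1 c2 d1 d2 S"
    and R: "{#R1, R2, R3, R4#} = {#a1, a2, b1, b2#}"
    and s: "st k F0 {#P1, P2, P3, P4#} T1 T2 U1 U2"
  shows "st (Suc k) (F0 + {#sub_union U1 c1, sub_union U2 c2#} + S)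
           {#sub_union P1 R1, sub_union P2 R2, sub_union P3 R3, sub_union P4 R4#} T1 T2 d1 d2"
    and "sgn_of sigma (sub_union P1 R1) = sgn_of sigma P1 * sgn_of sigma R1"
    and "sgn_of sigma (sub_union P2 R2) = sgn_of sigma P2 * sgn_of sigma R2"
    and "sgn_of sigma (sub_union P3 R3) = sgn_of sigma P3 * sgn_of sigma R3"
    and "sgn_of sigma (sub_union P4 R4) = sgn_of sigma P4 * sgn_of sigma R4"
proof -
  let ?t = "tot k F0 {#P1, P2, P3, P4#} T1 T2 U1 U2"
  let ?F = "{#a1, a2#} + {#b1, b2#} + {#c1, c2#} + {#d1, d2#} + S"
  let ?Hs = "H (Suc k)"
  have isu: "isU (Suc k)" using c2 unfolding isU_def by simp
  have MM: "Min (Uk (Suc k)) = Min (Uk k)" "Max (Uk (Suc k)) = Suc k" using MinMax_ins[OF u isu] by auto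
  have M0: "M0 (Suc k) = M0 k" using M0_nl xne by simp
  have pre: "\<And>X. X \<in># ?t \<Longrightarrow> fst X \<subseteq> Vk k \<and> snd X \<subseteq> Ek k" using tot_sg s by blast
  have psg: "\<And>Y. Y \<in># ?F \<Longrightarrow> subgraph_of ends Y (fst ?Hs) (snd ?Hs)" using psi_sg[OF ps] by blast
  have post: "\<And>Y. Y \<in># ?F \<Longrightarrow> fst Y \<subseteq> fst ?Hs \<and> snd Y \<subseteq> snd ?Hs" using psg unfolding subgraph_of_def by blast
  have VH': "Vk k \<inter> fst ?Hs \<subseteq> {x k}" using VH k by simp
  have EH': "Ek k \<inter> snd ?Hs = {}" using EH k by simp
  have inter: "\<And>X Y. X \<in># ?t \<Longrightarrow> Y \<in># ?F \<Longrightarrow> fst X \<inter> fst Y \<subseteq> {x k} \<and> snd X \<inter> snd Y = {}"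
  proof -
    fix X Y assume "X \<in># ?t" "Y \<in># ?F"
    then have "fst X \<subseteq> Vk k" "snd X \<subseteq> Ek k" "fst Y \<subseteq> fst ?Hs" "snd Y \<subseteq> snd ?Hs" using pre post by auto
    then show "fst X \<inter> fst Y \<subseteq> {x k} \<and> snd X \<inter> snd Y = {}" using VH' EH' by blast
  qed
  have sgmono: "\<And>X. X \<in># ?t \<Longrightarrow> subgraph_of ends X (Vk (Suc k)) (Ek (Suc k))"
    using s unfolding st_def Vk_Suc Ek_Suc by (meson Un_upper1 sg_mono)
  have sgmono2: "\<And>Y. Y \<in># ?F \<Longrightarrow> subgraph_of ends Y (Vk (Suc k)) (Ek (Suc k))"
    using psg unfolding Vk_Suc Ek_Suc by (meson Un_upper2 sg_mono)
  have sgU: "\<And>X Y. X \<in># ?t \<Longrightarrow> Y \<in># ?F \<Longrightarrow> subgraph_of ends (sub_union X Y) (Vk (Suc k)) (Ek (Suc k))"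
    using sgmono sgmono2 sg_union by (metis Un_absorb)
  have Rin: "R1 \<in># ?F" "R2 \<in># ?F" "R3 \<in># ?F" "R4 \<in># ?F"
  proof -
    have "set_mset {#R1, R2, R3, R4#} = set_mset {#a1, a2, b1, b2#}" by (simp only: R)
    then have "{R1, R2, R3, R4} \<subseteq> {a1, a2, b1, b2}" by simp
    then show "R1 \<in># ?F" "R2 \<in># ?F" "R3 \<in># ?F" "R4 \<in># ?F" by auto
  qed
  have fin: "\<And>X. X \<in># ?t \<Longrightarrow> finite (snd X)"
  proof -
    fix X assume "X \<in># ?t"
    then have "snd X \<subseteq> Ek k" using pre by blast
    moreover have "Ek k \<subseteq> E" using Ek_sub k by simp
    ultimately have "snd X \<subseteq> E" by blast
    moreover have "finite E" using G unfolding signed_graph_def by blast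
    ultimately show "finite (snd X)" by (rule finite_subset)
  qed
  have fin2: "\<And>Y. Y \<in># ?F \<Longrightarrow> finite (snd Y)"
  proof -
    fix Y assume "Y \<in># ?F"
    then have "snd Y \<subseteq> snd ?Hs" using post by blast
    moreover have "finite (snd ?Hs)" using Hfin k by simp
    ultimately show "finite (snd Y)" by (rule finite_subset)
  qed
  have Pin: "P1 \<in># ?t" "P2 \<in># ?t" "P3 \<in># ?t" "P4 \<in># ?t" unfolding tot_def by auto
  show "sgn_of sigma (sub_union P1 R1) = sgn_of sigma P1 * sgn_of sigma R1"
    by (rule sgn_union) (use fin fin2 inter Pin Rin in blast)+
  show "sgn_of sigma (sub_union P2 R2) = sgn_of sigma P2 * sgn_of sigma R2"
    by (rule sgn_union) (use fin fin2 inter Pin Rin in blast)+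
  show "sgn_of sigma (sub_union P3 R3) = sgn_of sigma P3 * sgn_of sigma R3"
    by (rule sgn_union) (use fin fin2 inter Pin Rin in blast)+
  show "sgn_of sigma (sub_union P4 R4) = sgn_of sigma P4 * sgn_of sigma R4"
    by (rule sgn_union) (use fin fin2 inter Pin Rin in blast)+
  have Uin: "U1 \<in># ?t" "U2 \<in># ?t" "T1 \<in># ?t" "T2 \<in># ?t" unfolding tot_def by auto
  have Cin: "c1 \<in># ?F" "c2 \<in># ?F" "d1 \<in># ?F" "d2 \<in># ?F" "a1 \<in># ?F" "a2 \<in># ?F" "b1 \<in># ?F" "b2 \<in># ?F" by auto
  have ctad: "\<And>c. c \<in> {c1, c2} \<Longrightarrow> \<exists>C. tadpole_with ends sigma (x k) c C" using ps unfolding psiD_def tadpole_def by blast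
  have dtad: "\<And>d. d \<in> {d1, d2} \<Longrightarrow> \<exists>C. tadpole_with ends sigma (x (Suc k)) d C" using ps unfolding psiD_def tadpole_def by blast
  have Rp: "\<And>R. R \<in> {R1, R2, R3, R4} \<Longrightarrow> is_path ends (x k) (x (Suc k)) R"
  proof -
    have "set_mset {#R1, R2, R3, R4#} = set_mset {#a1, a2, b1, b2#}" by (simp only: R)
    then have "{R1, R2, R3, R4} = {a1, a2, b1, b2}" by simp
    then show "\<And>R. R \<in> {R1, R2, R3, R4} \<Longrightarrow> is_path ends (x k) (x (Suc k)) R" using ps unfolding psiD_def by auto
  qed
  have bar: "\<And>U c. U \<in> {U1, U2} \<Longrightarrow> c \<in> {c1, c2} \<Longrightarrow> signed_circuit ends sigma (sub_union U c)"
  proof -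
    fix U c assume U: "U \<in> {U1, U2}" and c: "c \<in> {c1, c2}"
    obtain C1 where C1: "tadpole_with ends sigma (x k) U C1" using s U unfolding st_def by blast
    obtain C2 where C2: "tadpole_with ends sigma (x k) c C2" using ctad c by blast
    have "U \<in># ?t" "c \<in># ?F" using U c Uin Cin by auto
    then have "is_barbell ends sigma (sub_union U c)"
      using barbell_join[OF C1 C2] inter by blast
    then show "signed_circuit ends sigma (sub_union U c)" unfolding signed_circuit_def by simp
  qed
  show "st (Suc k) (F0 + {#sub_union U1 c1, sub_union U2 c2#} + S)
           {#sub_union P1 R1, sub_union P2 R2, sub_union P3 R3, sub_union P4 R4#} T1 T2 d1 d2"
    unfolding st_def
  proof (intro conjI)
    have "\<And>Y. Y \<in># S \<Longrightarrow> Y \<in># ?F" by simp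
    show "\<forall>X\<in>#tot (Suc k) (F0 + {#sub_union U1 c1, sub_union U2 c2#} + S)
           {#sub_union P1 R1, sub_union P2 R2, sub_union P3 R3, sub_union P4 R4#} T1 T2 d1 d2.
           subgraph_of ends X (Vk (Suc k)) (Ek (Suc k))"
    proof
      fix X assume X: "X \<in># tot (Suc k) (F0 + {#sub_union U1 c1, sub_union U2 c2#} + S)
           {#sub_union P1 R1, sub_union P2 R2, sub_union P3 R3, sub_union P4 R4#} T1 T2 d1 d2"
      have F0t: "\<And>Y. Y \<in># F0 \<Longrightarrow> Y \<in># ?t" "\<And>Y. Y \<in># M0 k \<Longrightarrow> Y \<in># ?t" unfolding tot_def by auto
      consider "X \<in># F0" | "X \<in># M0 k" | "X \<in># S" | "X = sub_union U1 c1" | "X = sub_union U2 c2"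
        | "X = sub_union P1 R1" | "X = sub_union P2 R2" | "X = sub_union P3 R3" | "X = sub_union P4 R4"
        | "X = T1" | "X = T2" | "X = d1" | "X = d2"
        using X unfolding tot_def M0 by auto
      then show "subgraph_of ends X (Vk (Suc k)) (Ek (Suc k))"
      proof cases
        case 1 then show ?thesis using sgmono F0t by blast
      next
        case 2 then show ?thesis using sgmono F0t by blast
      next
        case 3 then show ?thesis using sgmono2 \<open>\<And>Y. Y \<in># S \<Longrightarrow> Y \<in># ?F\<close> by blast
      next
        case 4 then show ?thesis using sgU Uin Cin by blast
      next
        case 5 then show ?thesis using sgU Uin Cin by blast
      next
        case 6 then show ?thesis using sgU Pin Rin by blast
      next
        case 7 then show ?thesis using sgU Pin Rin by blast
      next
        case 8 then show ?thesis using sgU Pin Rin by blast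
      next
        case 9 then show ?thesis using sgU Pin Rin by blast
      next
        case 10 then show ?thesis using sgmono Uin by blast
      next
        case 11 then show ?thesis using sgmono Uin by blast
      next
        case 12 then show ?thesis using sgmono2 Cin by blast
      next
        case 13 then show ?thesis using sgmono2 Cin by blast
      qed
    qed
    show "\<forall>e'\<in>Ek (Suc k). cnt e' (tot (Suc k) (F0 + {#sub_union U1 c1, sub_union U2 c2#} + S)
           {#sub_union P1 R1, sub_union P2 R2, sub_union P3 R3, sub_union P4 R4#} T1 T2 d1 d2) = 6"
    proof
      fix e' assume e': "e' \<in> Ek (Suc k)"
      show "cnt e' (tot (Suc k) (F0 + {#sub_union U1 c1, sub_union U2 c2#} + S)
           {#sub_union P1 R1, sub_union P2 R2, sub_union P3 R3, sub_union P4 R4#} T1 T2 d1 d2) = 6"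
      proof (cases "e' \<in> Ek k")
        case True
        have z: "\<And>Y. Y \<in># ?F \<Longrightarrow> e' \<notin> snd Y" using post EH' True by blast
        have "cnt e' S = 0" using z by (auto intro!: cnt_zero)
        moreover have "e' \<notin> snd c1" "e' \<notin> snd c2" "e' \<notin> snd d1" "e' \<notin> snd d2"
          "e' \<notin> snd R1" "e' \<notin> snd R2" "e' \<notin> snd R3" "e' \<notin> snd R4" using z Cin Rin by auto
        moreover have "cnt e' ?t = 6" using s True unfolding st_def by blast
        ultimately show ?thesis unfolding tot_def M0 by (simp; linarith)
      next
        case False
        then have eH: "e' \<in> snd ?Hs" using e' unfolding Ek_Suc by auto
        have z: "\<And>X. X \<in># ?t \<Longrightarrow> e' \<notin> snd X" using pre EH' eH by blast
        have "cnt e' F0 = 0" "cnt e' (M0 k) = 0" using z unfolding tot_def by (auto intro!: cnt_zero)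
        moreover have "e' \<notin> snd P1" "e' \<notin> snd P2" "e' \<notin> snd P3" "e' \<notin> snd P4"
           "e' \<notin> snd T1" "e' \<notin> snd T2" "e' \<notin> snd U1" "e' \<notin> snd U2" using z Pin Uin by auto
        moreover have c6: "cnt e' ?F = 6" using psi_cov[OF ps eH] .
        moreover have "cnt e' {#R1, R2, R3, R4#} = cnt e' {#a1, a2, b1, b2#}" by (simp only: R)
        ultimately show ?thesis unfolding tot_def M0 by (simp; linarith)
      qed
    qed
    show "\<forall>Z\<in>#F0 + {#sub_union U1 c1, sub_union U2 c2#} + S. signed_circuit ends sigma Z"
      using s bar ps unfolding st_def psiD_def by auto
    have "\<And>P R. P \<in># ?t \<Longrightarrow> P \<in># {#P1, P2, P3, P4#} \<Longrightarrow> R \<in># ?F \<Longrightarrow> R \<in> {R1, R2, R3, R4} \<Longrightarrow>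
           is_path ends (x 0) (x (Suc k)) (sub_union P R)"
    proof -
      fix P R assume a: "P \<in># ?t" "P \<in># {#P1, P2, P3, P4#}" "R \<in># ?F" "R \<in> {R1, R2, R3, R4}"
      have "is_path ends (x 0) (x k) P" using s a(2) unfolding st_def by blast
      then show "is_path ends (x 0) (x (Suc k)) (sub_union P R)"
        using path_concat[OF _ Rp[OF a(4)]] inter[OF a(1) a(3)] by blast
    qed
    then show "\<forall>P\<in>#{#sub_union P1 R1, sub_union P2 R2, sub_union P3 R3, sub_union P4 R4#}.
                 is_path ends (x 0) (x (Suc k)) P" using Pin Rin by auto
    show "\<forall>T\<in>{T1, T2}. \<exists>C. tadpole_with ends sigma (x 0) T C \<and>
          fst C \<subseteq> fst (H (Min (Uk (Suc k)))) \<and> snd C \<subseteq> snd (H (Min (Uk (Suc k))))"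
      using s unfolding st_def MM by blast
    have "\<And>d. d \<in> {d1, d2} \<Longrightarrow> \<exists>C. tadpole_with ends sigma (x (Suc k)) d C \<and>
          fst C \<subseteq> fst (H (Max (Uk (Suc k)))) \<and> snd C \<subseteq> snd (H (Max (Uk (Suc k))))"
    proof -
      fix d assume d: "d \<in> {d1, d2}"
      obtain C where C: "tadpole_with ends sigma (x (Suc k)) d C" using dtad d by blast
      have "d \<in># ?F" using d by auto
      then have "subgraph_of ends d (fst ?Hs) (snd ?Hs)" using psg by blast
      then have "fst C \<subseteq> fst ?Hs \<and> snd C \<subseteq> snd ?Hs" using tad_sub C by blast
      then show "\<exists>C. tadpole_with ends sigma (x (Suc k)) d C \<and>
          fst C \<subseteq> fst (H (Max (Uk (Suc k)))) \<and> snd C \<subseteq> snd (H (Max (Uk (Suc k))))"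
        unfolding MM using C by blast
    qed
    then show "\<forall>T\<in>{d1, d2}. \<exists>C. tadpole_with ends sigma (x (Suc k)) T C \<and>
          fst C \<subseteq> fst (H (Max (Uk (Suc k)))) \<and> snd C \<subseteq> snd (H (Max (Uk (Suc k))))" by blast
  qed
qed

end



context sdl begin

lemma S_B2_0:
  assumes k: "Suc k \<le> n" and u: "Uk k = {}" and xne: "x k \<noteq> x (Suc k)" and c2: "card (snd (H (Suc k))) \<ge> 2"
    and ps: "psiD k a1 a2 b1 b2 c1 c2 d1 d2 S"
    and Q: "is_path ends (x 0) (x k) Q" "subgraph_of ends Q (Vk k) (Ek k)" "snd Q = Ek k"
  shows "st (Suc k) S {#sub_union Q a1, sub_union Q a2, sub_union Q b1, sub_union Q b2#}
           (sub_union Q c1) (sub_union Q c2) d1 d2"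
    and "[sgn_of sigma (sub_union Q a1), sgn_of sigma (sub_union Q a2), sgn_of sigma (sub_union Q b1),
          sgn_of sigma (sub_union Q b2)] = map ((*) (sgn_of sigma Q)) [1, 1, -1, -1]"
proof -
  let ?F = "{#a1, a2#} + {#b1, b2#} + {#c1, c2#} + {#d1, d2#} + S"
  let ?Hs = "H (Suc k)"
  have isu: "isU (Suc k)" using c2 unfolding isU_def by simp
  have Uk1: "Uk (Suc k) = {Suc k}" using Uk_Suc[of k] u isu by simp
  have M0: "M0 (Suc k) = {#}" using M0_nl[OF xne] M0_0[OF u] by simp
  have psg: "\<And>Y. Y \<in># ?F \<Longrightarrow> subgraph_of ends Y (fst ?Hs) (snd ?Hs)" using psi_sg[OF ps] by blast
  have post: "\<And>Y. Y \<in># ?F \<Longrightarrow> fst Y \<subseteq> fst ?Hs \<and> snd Y \<subseteq> snd ?Hs" using psg unfolding subgraph_of_def by blast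
  have VH': "Vk k \<inter> fst ?Hs \<subseteq> {x k}" using VH k by simp
  have EH': "Ek k \<inter> snd ?Hs = {}" using EH k by simp
  have Qs: "fst Q \<subseteq> Vk k" "snd Q \<subseteq> Ek k" using Q(2) unfolding subgraph_of_def by auto
  have inter: "\<And>Y. Y \<in># ?F \<Longrightarrow> fst Q \<inter> fst Y \<subseteq> {x k} \<and> snd Q \<inter> snd Y = {}"
  proof -
    fix Y assume "Y \<in># ?F"
    then have "fst Y \<subseteq> fst ?Hs" "snd Y \<subseteq> snd ?Hs" using post by auto
    then show "fst Q \<inter> fst Y \<subseteq> {x k} \<and> snd Q \<inter> snd Y = {}" using VH' EH' Qs by blast
  qed
  have Qsg: "subgraph_of ends Q (Vk (Suc k)) (Ek (Suc k))"
    using Q(2) unfolding Vk_Suc Ek_Suc by (meson Un_upper1 sg_mono)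
  have sgmono2: "\<And>Y. Y \<in># ?F \<Longrightarrow> subgraph_of ends Y (Vk (Suc k)) (Ek (Suc k))"
    using psg unfolding Vk_Suc Ek_Suc by (meson Un_upper2 sg_mono)
  have sgU: "\<And>Y. Y \<in># ?F \<Longrightarrow> subgraph_of ends (sub_union Q Y) (Vk (Suc k)) (Ek (Suc k))"
    using Qsg sgmono2 sg_union by (metis Un_absorb)
  have finQ: "finite (snd Q)" using path_basic[OF Q(1)] by simp
  have fin2: "\<And>Y. Y \<in># ?F \<Longrightarrow> finite (snd Y)"
  proof -
    fix Y assume "Y \<in># ?F"
    then have "snd Y \<subseteq> snd ?Hs" using post by blast
    moreover have "finite (snd ?Hs)" using Hfin k by simp
    ultimately show "finite (snd Y)" by (rule finite_subset)
  qed
  have Cin: "c1 \<in># ?F" "c2 \<in># ?F" "d1 \<in># ?F" "d2 \<in># ?F" "a1 \<in># ?F" "a2 \<in># ?F" "b1 \<in># ?F" "b2 \<in># ?F" by auto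
  have sg: "\<And>Y. Y \<in># ?F \<Longrightarrow> sgn_of sigma (sub_union Q Y) = sgn_of sigma Q * sgn_of sigma Y"
    by (rule sgn_union) (use finQ fin2 inter in blast)+
  have sgv: "sgn_of sigma a1 = 1" "sgn_of sigma a2 = 1" "sgn_of sigma b1 = -1" "sgn_of sigma b2 = -1"
    using ps unfolding psiD_def by auto
  show "[sgn_of sigma (sub_union Q a1), sgn_of sigma (sub_union Q a2), sgn_of sigma (sub_union Q b1),
          sgn_of sigma (sub_union Q b2)] = map ((*) (sgn_of sigma Q)) [1, 1, -1, -1]"
    using sg[OF Cin(5)] sg[OF Cin(6)] sg[OF Cin(7)] sg[OF Cin(8)] sgv by simp
  have ctad: "\<And>c. c \<in> {c1, c2} \<Longrightarrow> \<exists>C. tadpole_with ends sigma (x k) c C" using ps unfolding psiD_def tadpole_def by blast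
  have dtad: "\<And>d. d \<in> {d1, d2} \<Longrightarrow> \<exists>C. tadpole_with ends sigma (x (Suc k)) d C" using ps unfolding psiD_def tadpole_def by blast
  have apath: "\<And>R. R \<in> {a1, a2, b1, b2} \<Longrightarrow> is_path ends (x k) (x (Suc k)) R" using ps unfolding psiD_def by auto
  show "st (Suc k) S {#sub_union Q a1, sub_union Q a2, sub_union Q b1, sub_union Q b2#}
           (sub_union Q c1) (sub_union Q c2) d1 d2"
    unfolding st_def
  proof (intro conjI)
    have SF: "\<And>Y. Y \<in># S \<Longrightarrow> Y \<in># ?F" by simp
    show "\<forall>X\<in>#tot (Suc k) S {#sub_union Q a1, sub_union Q a2, sub_union Q b1, sub_union Q b2#}
           (sub_union Q c1) (sub_union Q c2) d1 d2. subgraph_of ends X (Vk (Suc k)) (Ek (Suc k))"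
    proof
      fix X assume X: "X \<in># tot (Suc k) S {#sub_union Q a1, sub_union Q a2, sub_union Q b1, sub_union Q b2#}
           (sub_union Q c1) (sub_union Q c2) d1 d2"
      consider "X \<in># S" | "X = sub_union Q a1" | "X = sub_union Q a2" | "X = sub_union Q b1" | "X = sub_union Q b2"
        | "X = sub_union Q c1" | "X = sub_union Q c2" | "X = d1" | "X = d2"
        using X unfolding tot_def M0 by auto
      then show "subgraph_of ends X (Vk (Suc k)) (Ek (Suc k))"
      proof cases
        case 1 then show ?thesis using sgmono2 SF by blast
      qed (use sgU sgmono2 Cin in blast)+
    qed
    show "\<forall>e'\<in>Ek (Suc k). cnt e' (tot (Suc k) S {#sub_union Q a1, sub_union Q a2, sub_union Q b1, sub_union Q b2#}
           (sub_union Q c1) (sub_union Q c2) d1 d2) = 6"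
    proof
      fix e' assume e': "e' \<in> Ek (Suc k)"
      show "cnt e' (tot (Suc k) S {#sub_union Q a1, sub_union Q a2, sub_union Q b1, sub_union Q b2#}
           (sub_union Q c1) (sub_union Q c2) d1 d2) = 6"
      proof (cases "e' \<in> Ek k")
        case True
        have z: "\<And>Y. Y \<in># ?F \<Longrightarrow> e' \<notin> snd Y" using post EH' True by blast
        have "cnt e' S = 0" using z by (auto intro!: cnt_zero)
        moreover have "e' \<notin> snd c1" "e' \<notin> snd c2" "e' \<notin> snd d1" "e' \<notin> snd d2"
          "e' \<notin> snd a1" "e' \<notin> snd a2" "e' \<notin> snd b1" "e' \<notin> snd b2" using z Cin by auto
        moreover have "e' \<in> snd Q" using True Q(3) by simp
        ultimately show ?thesis unfolding tot_def M0 by (simp; linarith)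
      next
        case False
        then have eH: "e' \<in> snd ?Hs" using e' unfolding Ek_Suc by auto
        have "e' \<notin> snd Q" using Q(3) False by simp
        moreover have c6: "cnt e' ?F = 6" using psi_cov[OF ps eH] .
        ultimately show ?thesis unfolding tot_def M0 by (simp; linarith)
      qed
    qed
    show "\<forall>Z\<in>#S. signed_circuit ends sigma Z" using ps unfolding psiD_def by auto
    have "\<And>R. R \<in> {a1, a2, b1, b2} \<Longrightarrow> is_path ends (x 0) (x (Suc k)) (sub_union Q R)"
    proof -
      fix R assume a: "R \<in> {a1, a2, b1, b2}"
      then have "R \<in># ?F" by auto
      then show "is_path ends (x 0) (x (Suc k)) (sub_union Q R)"
        using path_concat[OF Q(1) apath[OF a]] inter by blast
    qed
    then show "\<forall>P\<in>#{#sub_union Q a1, sub_union Q a2, sub_union Q b1, sub_union Q b2#}.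
                 is_path ends (x 0) (x (Suc k)) P" by auto
    have "\<And>c. c \<in> {c1, c2} \<Longrightarrow> \<exists>C. tadpole_with ends sigma (x 0) (sub_union Q c) C \<and>
          fst C \<subseteq> fst (H (Min (Uk (Suc k)))) \<and> snd C \<subseteq> snd (H (Min (Uk (Suc k))))"
    proof -
      fix c assume c: "c \<in> {c1, c2}"
      obtain C where C: "tadpole_with ends sigma (x k) c C" using ctad c by blast
      have cF: "c \<in># ?F" using c by auto
      then have "subgraph_of ends c (fst ?Hs) (snd ?Hs)" using psg by blast
      then have "fst C \<subseteq> fst ?Hs \<and> snd C \<subseteq> snd ?Hs" using tad_sub C by blast
      moreover have "tadpole_with ends sigma (x 0) (sub_union Q c) C"
        using tadpole_prepend[OF Q(1) C] inter[OF cF] by blast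
      ultimately show "\<exists>C. tadpole_with ends sigma (x 0) (sub_union Q c) C \<and>
          fst C \<subseteq> fst (H (Min (Uk (Suc k)))) \<and> snd C \<subseteq> snd (H (Min (Uk (Suc k))))"
        unfolding Uk1 Min_singleton by blast
    qed
    then show "\<forall>T\<in>{sub_union Q c1, sub_union Q c2}. \<exists>C. tadpole_with ends sigma (x 0) T C \<and>
          fst C \<subseteq> fst (H (Min (Uk (Suc k)))) \<and> snd C \<subseteq> snd (H (Min (Uk (Suc k))))" by blast
    have "\<And>d. d \<in> {d1, d2} \<Longrightarrow> \<exists>C. tadpole_with ends sigma (x (Suc k)) d C \<and>
          fst C \<subseteq> fst (H (Max (Uk (Suc k)))) \<and> snd C \<subseteq> snd (H (Max (Uk (Suc k))))"
    proof -
      fix d assume d: "d \<in> {d1, d2}"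
      obtain C where C: "tadpole_with ends sigma (x (Suc k)) d C" using dtad d by blast
      have "d \<in># ?F" using d by auto
      then have "subgraph_of ends d (fst ?Hs) (snd ?Hs)" using psg by blast
      then have "fst C \<subseteq> fst ?Hs \<and> snd C \<subseteq> snd ?Hs" using tad_sub C by blast
      then show "\<exists>C. tadpole_with ends sigma (x (Suc k)) d C \<and>
          fst C \<subseteq> fst (H (Max (Uk (Suc k)))) \<and> snd C \<subseteq> snd (H (Max (Uk (Suc k))))"
        unfolding Uk1 Max_singleton using C by blast
    qed
    then show "\<forall>T\<in>{d1, d2}. \<exists>C. tadpole_with ends sigma (x (Suc k)) T C \<and>
          fst C \<subseteq> fst (H (Max (Uk (Suc k)))) \<and> snd C \<subseteq> snd (H (Max (Uk (Suc k))))" by blast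
  qed
qed

end



context sdl begin

lemma good_perm:
  assumes "good k [a, b, c, d]"
  shows "good k [c, d, a, b]" "good k [a, c, b, d]"
proof -
  obtain F0 P1 P2 P3 P4 T1 T2 U1 U2 where s: "st k F0 {#P1, P2, P3, P4#} T1 T2 U1 U2"
    "[a, b, c, d] = [sgn_of sigma P1, sgn_of sigma P2, sgn_of sigma P3, sgn_of sigma P4]"
    using assms unfolding good_def by blast
  have m1: "{#P3, P4, P1, P2#} = {#P1, P2, P3, P4#}" by (simp add: add_mset_commute)
  have "st k F0 {#P3, P4, P1, P2#} T1 T2 U1 U2" unfolding m1 by (rule s(1))
  moreover have "[c, d, a, b] = [sgn_of sigma P3, sgn_of sigma P4, sgn_of sigma P1, sgn_of sigma P2]" using s(2) by simp
  ultimately show "good k [c, d, a, b]" unfolding good_def by blast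
  have m2: "{#P1, P3, P2, P4#} = {#P1, P2, P3, P4#}" by (simp add: add_mset_commute)
  have "st k F0 {#P1, P3, P2, P4#} T1 T2 U1 U2" unfolding m2 by (rule s(1))
  moreover have "[a, c, b, d] = [sgn_of sigma P1, sgn_of sigma P3, sgn_of sigma P2, sgn_of sigma P4]" using s(2) by simp
  ultimately show "good k [a, c, b, d]" unfolding good_def by blast
qed

lemma st_fin: "k \<le> n \<Longrightarrow> st k F0 PM T1 T2 U1 U2 \<Longrightarrow> P \<in># PM \<Longrightarrow> finite (snd P) \<and> snd P \<subseteq> Ek k"
proof -
  assume a: "k \<le> n" "st k F0 PM T1 T2 U1 U2" "P \<in># PM"
  have "P \<in># tot k F0 PM T1 T2 U1 U2" unfolding tot_def using a(3) by simp
  then have 1: "snd P \<subseteq> Ek k" using tot_sg[OF a(2)] by blast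
  have 2: "Ek k \<subseteq> E" using Ek_sub a by simp
  have 3: "finite E" using G unfolding signed_graph_def by blast
  have "finite (snd P)" using finite_subset[OF _ 3, of "snd P"] 1 2 by blast
  then show ?thesis using 1 by blast
qed

lemma good_B1:
  assumes k: "Suc k \<le> n" and nu: "\<not> isU (Suc k)"
    and e: "snd (H (Suc k)) = {e}" "ends e = {x k, x (Suc k)}" and xne: "x k \<noteq> x (Suc k)"
    and g: "good k [p1, p2, p3, p4]"
  shows "good (Suc k) [sigma e * p1, sigma e * p2, sigma e * p3, sigma e * p4]"
proof -
  obtain F0 P1 P2 P3 P4 T1 T2 U1 U2 where s: "st k F0 {#P1, P2, P3, P4#} T1 T2 U1 U2"
    "[p1, p2, p3, p4] = [sgn_of sigma P1, sgn_of sigma P2, sgn_of sigma P3, sgn_of sigma P4]"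
    using g unfolding good_def by blast
  define Ee where "Ee = ({x k, x (Suc k)}, {e})"
  have s2: "st (Suc k) F0 {#sub_union P1 Ee, sub_union P2 Ee, sub_union P3 Ee, sub_union P4 Ee#} T1 T2
            (sub_union Ee U1) (sub_union Ee U2)" using S_B1[OF k nu e xne s(1) Ee_def] .
  have eE: "e \<notin> Ek k" using EH[OF k] e by auto
  have sE: "sgn_of sigma Ee = sigma e" unfolding Ee_def sgn_of_def by simp
  have "\<And>P. P \<in># {#P1, P2, P3, P4#} \<Longrightarrow> sgn_of sigma (sub_union P Ee) = sigma e * sgn_of sigma P"
  proof -
    fix P assume P: "P \<in># {#P1, P2, P3, P4#}"
    have "finite (snd P) \<and> snd P \<subseteq> Ek k" using st_fin[OF _ s(1) P] k by simp
    then have "sgn_of sigma (sub_union P Ee) = sgn_of sigma P * sgn_of sigma Ee"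
      by (intro sgn_union) (use eE Ee_def in auto)
    then show "sgn_of sigma (sub_union P Ee) = sigma e * sgn_of sigma P" using sE by simp
  qed
  then have "[sigma e * p1, sigma e * p2, sigma e * p3, sigma e * p4] =
     [sgn_of sigma (sub_union P1 Ee), sgn_of sigma (sub_union P2 Ee), sgn_of sigma (sub_union P3 Ee), sgn_of sigma (sub_union P4 Ee)]"
    using s(2) by simp
  then show ?thesis unfolding good_def using s2 by blast
qed

lemma good_B0:
  assumes k: "Suc k \<le> n" and u: "Uk k \<noteq> {}" and xe: "x k = x (Suc k)"
    and L: "H (Suc k) = ({x k}, {e})" "ends e = {x k}" "sigma e = -1"
    and g: "good k \<theta>"
  shows "good (Suc k) \<theta>"
proof -
  obtain F0 P1 P2 P3 P4 T1 T2 U1 U2 where s: "st k F0 {#P1, P2, P3, P4#} T1 T2 U1 U2"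
    "\<theta> = [sgn_of sigma P1, sgn_of sigma P2, sgn_of sigma P3, sgn_of sigma P4]"
    using g unfolding good_def by blast
  show ?thesis using S_B0[OF k u xe L s(1)] s(2) unfolding good_def by blast
qed

lemma sgn_pm: "finite A \<Longrightarrow> (\<forall>e\<in>A. sigma e = 1 \<or> sigma e = -1) \<Longrightarrow> (\<Prod>e\<in>A. sigma e) = 1 \<or> (\<Prod>e\<in>A. sigma e) = -1"
  by (induction A rule: finite_induct) auto

lemma sgnQ: "k \<le> n \<Longrightarrow> subgraph_of ends Q (Vk k) (Ek k) \<Longrightarrow> sgn_of sigma Q = 1 \<or> sgn_of sigma Q = -1"
proof -
  assume a: "k \<le> n" "subgraph_of ends Q (Vk k) (Ek k)"
  then have "snd Q \<subseteq> E" using Ek_sub unfolding subgraph_of_def by blast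
  moreover have "finite E" "\<forall>e\<in>E. sigma e = 1 \<or> sigma e = -1" using G unfolding signed_graph_def by auto
  ultimately show ?thesis unfolding sgn_of_def using sgn_pm[of "snd Q"] finite_subset by blast
qed

lemma good_B0_0:
  assumes k: "Suc k \<le> n" and u: "Uk k = {}" and xe: "x k = x (Suc k)"
    and L: "H (Suc k) = ({x k}, {e})" "ends e = {x k}" "sigma e = -1"
    and c: "claim0 k"
  shows "good (Suc k) [1, 1, 1, 1] \<or> good (Suc k) [-1, -1, -1, -1]"
proof -
  obtain Q where Q: "is_path ends (x 0) (x k) Q" "subgraph_of ends Q (Vk k) (Ek k)" "snd Q = Ek k"
    using c unfolding claim0_def by blast
  have c': "claim0 k" unfolding claim0_def using Q by blast
  obtain Q' where Q': "st (Suc k) {#} {#Q', Q', Q', Q'#} (sub_union Q' (H (Suc k))) (sub_union Q' (H (Suc k)))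
             (H (Suc k)) (H (Suc k))" "is_path ends (x 0) (x k) Q'"
    using S_B0_0[OF k u xe L c] by blast
  have "good (Suc k) [sgn_of sigma Q', sgn_of sigma Q', sgn_of sigma Q', sgn_of sigma Q']"
    unfolding good_def using Q'(1) by blast
  moreover have "sgn_of sigma Q' = 1 \<or> sgn_of sigma Q' = -1"
  proof -
    have "Q' \<in># tot (Suc k) {#} {#Q', Q', Q', Q'#} (sub_union Q' (H (Suc k))) (sub_union Q' (H (Suc k)))
             (H (Suc k)) (H (Suc k))" unfolding tot_def by simp
    then have "subgraph_of ends Q' (Vk (Suc k)) (Ek (Suc k))" using Q'(1) unfolding st_def by blast
    then show ?thesis using sgnQ k by blast
  qed
  ultimately show ?thesis by auto
qed

lemma good_B2:
  assumes k: "Suc k \<le> n" and u: "Uk k \<noteq> {}" and xne: "x k \<noteq> x (Suc k)" and c2: "card (snd (H (Suc k))) \<ge> 2"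
    and ps: "psiD k a1 a2 b1 b2 c1 c2 d1 d2 S"
    and R: "{#R1, R2, R3, R4#} = {#a1, a2, b1, b2#}"
    and g: "good k [p1, p2, p3, p4]"
  shows "good (Suc k) [p1 * sgn_of sigma R1, p2 * sgn_of sigma R2, p3 * sgn_of sigma R3, p4 * sgn_of sigma R4]"
proof -
  obtain F0 P1 P2 P3 P4 T1 T2 U1 U2 where s: "st k F0 {#P1, P2, P3, P4#} T1 T2 U1 U2"
    "[p1, p2, p3, p4] = [sgn_of sigma P1, sgn_of sigma P2, sgn_of sigma P3, sgn_of sigma P4]"
    using g unfolding good_def by blast
  note r = S_B2[OF k u xne c2 ps R s(1)]
  show ?thesis unfolding good_def
    by (rule exI[of _ "F0 + {#sub_union U1 c1, sub_union U2 c2#} + S"], rule exI[of _ "sub_union P1 R1"],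
        rule exI[of _ "sub_union P2 R2"], rule exI[of _ "sub_union P3 R3"], rule exI[of _ "sub_union P4 R4"],
        rule exI[of _ T1], rule exI[of _ T2], rule exI[of _ d1], rule exI[of _ d2]) (use r s(2) in simp)
qed

lemma good_B2_0:
  assumes k: "Suc k \<le> n" and u: "Uk k = {}" and xne: "x k \<noteq> x (Suc k)" and c2: "card (snd (H (Suc k))) \<ge> 2"
    and ps: "psiD k a1 a2 b1 b2 c1 c2 d1 d2 S"
    and c: "claim0 k"
  shows "good (Suc k) [1, 1, -1, -1]"
proof -
  obtain Q where Q: "is_path ends (x 0) (x k) Q" "subgraph_of ends Q (Vk k) (Ek k)" "snd Q = Ek k"
    using c unfolding claim0_def by blast
  note r = S_B2_0[OF k u xne c2 ps Q]
  have "good (Suc k) (map ((*) (sgn_of sigma Q)) [1, 1, -1, -1])"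
    unfolding good_def
    by (rule exI[of _ S], rule exI[of _ "sub_union Q a1"], rule exI[of _ "sub_union Q a2"],
        rule exI[of _ "sub_union Q b1"], rule exI[of _ "sub_union Q b2"], rule exI[of _ "sub_union Q c1"],
        rule exI[of _ "sub_union Q c2"], rule exI[of _ d1], rule exI[of _ d2]) (use r in simp)
  moreover have "sgn_of sigma Q = 1 \<or> sgn_of sigma Q = -1" using sgnQ[of k Q] Q(2) k by simp
  ultimately show ?thesis using good_perm(1)[of "Suc k" "-1" "-1" 1 1] by auto
qed

end



context sdl begin

lemma Bk_Suc: "Bk (Suc k) = Bk k \<union> (if x k \<noteq> x (Suc k) \<and> card (snd (H (Suc k))) \<ge> 2 then {Suc k} else {})"
  unfolding Bk_def by (auto simp: atLeastAtMostSuc_conv)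
lemma Bk_fin: "finite (Bk k)" unfolding Bk_def by auto
lemma Bk_Uk: "Bk k \<subseteq> Uk k" unfolding Bk_def Uk_def isU_def by auto
lemma Bk_nin: "Suc k \<notin> Bk k" unfolding Bk_def by auto

definition claim :: "nat \<Rightarrow> bool" where
  "claim k \<longleftrightarrow> (Uk k = {} \<longrightarrow> claim0 k) \<and>
     (Uk k \<noteq> {} \<and> card (Bk k) = 0 \<longrightarrow> good k [1, 1, 1, 1] \<or> good k [-1, -1, -1, -1]) \<and>
     (card (Bk k) = 1 \<longrightarrow> good k [1, 1, -1, -1]) \<and>
     (card (Bk k) \<ge> 2 \<longrightarrow> good k [1, 1, -1, -1] \<and> good k [1, 1, 1, 1] \<and> good k [-1, -1, -1, -1])"

lemma claim_base: "claim 0"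
proof -
  have u: "Uk 0 = {}" "Bk 0 = {}" unfolding Uk_def Bk_def by auto
  have "is_path ends (x 0) (x 0) ({x 0}, {})" by (rule path_triv)
  moreover have "subgraph_of ends ({x 0}, {}) (Vk 0) (Ek 0)" unfolding subgraph_of_def Vk0 Ek0 by simp
  moreover have "snd ({x 0}, {}) = Ek 0" using Ek0 by simp
  ultimately have "claim0 0" unfolding claim0_def by blast
  then show ?thesis unfolding claim_def using u by simp
qed

lemma claim_step:
  assumes psi: "\<forall>i\<in>B2 n x H. \<exists>F. psi_cover ends sigma (fst (H i)) (snd (H i)) (x (i-1)) (x i) 2 F"
    and k: "Suc k \<le> n" and IH: "claim k"
  shows "claim (Suc k)"
proof -
  consider (L) "x k = x (Suc k)" | (E1) "x k \<noteq> x (Suc k)" "\<not> card (snd (H (Suc k))) \<ge> 2"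
    | (E2) "x k \<noteq> x (Suc k)" "card (snd (H (Suc k))) \<ge> 2" by blast
  then show ?thesis
  proof cases
    case L
    obtain e where e: "H (Suc k) = ({x k}, {e})" "ends e = {x k}" "sigma e = -1" using type0[OF k L] by blast
    have isu: "isU (Suc k)" using L unfolding isU_def by simp
    have Bk: "Bk (Suc k) = Bk k" using Bk_Suc[of k] L by simp
    have Uk1: "Uk (Suc k) \<noteq> {}" using Uk_Suc[of k] isu by simp
    show ?thesis
    proof (cases "Uk k = {}")
      case True
      have c0: "claim0 k" using IH True unfolding claim_def by blast
      have "card (Bk k) = 0" using Bk_Uk[of k] True by simp
      then show ?thesis unfolding claim_def using good_B0_0[OF k True L e c0] Bk Uk1 by simp
    next
      case False
      have "\<And>\<theta>. good k \<theta> \<Longrightarrow> good (Suc k) \<theta>" using good_B0[OF k False L e] by blast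
      then show ?thesis using IH False Uk1 unfolding claim_def Bk by blast
    qed
  next
    case E1
    obtain e where e: "snd (H (Suc k)) = {e}" "ends e = {x k, x (Suc k)}" "sigma e = 1 \<or> sigma e = -1"
      using type1[OF k E1] by blast
    have nu: "\<not> isU (Suc k)" using E1 unfolding isU_def by simp
    have Bk: "Bk (Suc k) = Bk k" using Bk_Suc[of k] E1 by simp
    have Uk1: "Uk (Suc k) = Uk k" using Uk_Suc[of k] nu by simp
    show ?thesis
    proof (cases "Uk k = {}")
      case True
      have c0: "claim0 k" using IH True unfolding claim_def by blast
      have "card (Bk k) = 0" using Bk_Uk[of k] True by simp
      then show ?thesis unfolding claim_def using S_B1_0[OF k e(1,2) E1(1) c0] Bk Uk1 True by simp
    next
      case False
      have g: "\<And>p1 p2 p3 p4. good k [p1, p2, p3, p4] \<Longrightarrow> good (Suc k) [sigma e * p1, sigma e * p2, sigma e * p3, sigma e * p4]"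
        using good_B1[OF k nu e(1,2) E1(1)] by blast
      show ?thesis
      proof (cases "sigma e = 1")
        case True
        then have "\<And>p1 p2 p3 p4. good k [p1, p2, p3, p4] \<Longrightarrow> good (Suc k) [p1, p2, p3, p4]" using g by fastforce
        then show ?thesis using IH False unfolding claim_def Bk Uk1 by blast
      next
        case False2: False
        then have s: "sigma e = -1" using e(3) by simp
        have g1: "good k [1, 1, 1, 1] \<Longrightarrow> good (Suc k) [-1, -1, -1, -1]" using g[of 1 1 1 1] s by simp
        have g2: "good k [-1, -1, -1, -1] \<Longrightarrow> good (Suc k) [1, 1, 1, 1]" using g[of "-1" "-1" "-1" "-1"] s by simp
        have g3: "good k [1, 1, -1, -1] \<Longrightarrow> good (Suc k) [1, 1, -1, -1]"
          using g[of 1 1 "-1" "-1"] s good_perm(1)[of "Suc k" "-1" "-1" 1 1] by simp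
        show ?thesis using IH False g1 g2 g3 unfolding claim_def Bk Uk1 by blast
      qed
    qed
  next
    case E2
    have isu: "isU (Suc k)" using E2 unfolding isU_def by simp
    have Bk: "card (Bk (Suc k)) = Suc (card (Bk k))" using Bk_Suc[of k] E2 Bk_fin[of k] Bk_nin[of k] by simp
    have Uk1: "Uk (Suc k) \<noteq> {}" using Uk_Suc[of k] isu by simp
    have "Suc k \<in> B2 n x H" unfolding B2_def using E2 k by simp
    then obtain F where "psi_cover ends sigma (fst (H (Suc k))) (snd (H (Suc k))) (x k) (x (Suc k)) 2 F"
      using psi by fastforce
    then obtain a1 a2 b1 b2 c1 c2 d1 d2 S where ps: "psiD k a1 a2 b1 b2 c1 c2 d1 d2 S"
      using psi_get[OF k] by blast
    have sv: "sgn_of sigma a1 = 1" "sgn_of sigma a2 = 1" "sgn_of sigma b1 = -1" "sgn_of sigma b2 = -1"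
      using ps unfolding psiD_def by auto
    have m1: "{#a1, a2, b1, b2#} = {#a1, a2, b1, b2#}" by simp
    have m2: "{#b1, b2, a1, a2#} = {#a1, a2, b1, b2#}" by (simp add: add_mset_commute)
    have m3: "{#a1, b1, b2, a2#} = {#a1, a2, b1, b2#}" by (simp add: add_mset_commute)
    show ?thesis
    proof (cases "Uk k = {}")
      case True
      have c0: "claim0 k" using IH True unfolding claim_def by blast
      have "card (Bk k) = 0" using Bk_Uk[of k] True by simp
      then show ?thesis unfolding claim_def using good_B2_0[OF k True E2 ps c0] Bk Uk1 by simp
    next
      case False
      note gB = good_B2[OF k False E2 ps]
      show ?thesis
      proof (cases "card (Bk k) = 0")
        case True
        have "good k [1, 1, 1, 1] \<or> good k [-1, -1, -1, -1]" using IH True False unfolding claim_def by blast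
        moreover have "good k [1, 1, 1, 1] \<Longrightarrow> good (Suc k) [1, 1, -1, -1]"
          using gB[OF m1, of 1 1 1 1] sv by simp
        moreover have "good k [-1, -1, -1, -1] \<Longrightarrow> good (Suc k) [1, 1, -1, -1]"
          using gB[OF m2, of "-1" "-1" "-1" "-1"] sv by simp
        ultimately have "good (Suc k) [1, 1, -1, -1]" by blast
        then show ?thesis unfolding claim_def using Bk True Uk1 by simp
      next
        case False2: False
        then have g0: "good k [1, 1, -1, -1]" using IH unfolding claim_def by (metis One_nat_def less_2_cases_iff not_less)
        have "good (Suc k) [1, 1, 1, 1]" using gB[OF m1 g0] sv by simp
        moreover have "good (Suc k) [-1, -1, -1, -1]" using gB[OF m2 g0] sv by simp
        moreover have "good (Suc k) [1, 1, -1, -1]" using gB[OF m3 good_perm(2)[OF g0]] sv by simp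
        ultimately show ?thesis unfolding claim_def using Bk False2 Uk1 by simp
      qed
    qed
  qed
qed

lemma claim_all:
  assumes psi: "\<forall>i\<in>B2 n x H. \<exists>F. psi_cover ends sigma (fst (H i)) (snd (H i)) (x (i-1)) (x i) 2 F"
  shows "k \<le> n \<Longrightarrow> claim k"
proof (induction k)
  case 0 then show ?case using claim_base by simp
next
  case (Suc k) then show ?case using claim_step[OF psi] by simp
qed

end



theorem mainTheorem2:
  fixes ends :: "'e \<Rightarrow> 'v set" and sigma :: "'e \<Rightarrow> int"
    and V :: "'v set" and E :: "'e set" and n :: nat
    and x :: "nat \<Rightarrow> 'v" and H :: "nat \<Rightarrow> ('v,'e) sub" and \<theta> :: "int list"
  assumes G: "signed_graph ends sigma V E"
    and parts: "parts_decomp ends sigma V E n x H"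
    and B2ne: "card (B2 n x H) \<ge> 1"
    and theta1: "card (B2 n x H) = 1 \<Longrightarrow> \<theta> = [1, 1, -1, -1]"
    and theta2: "card (B2 n x H) \<ge> 2 \<Longrightarrow> \<theta> = [1, 1, -1, -1] \<or> \<theta> = [-1, -1, -1, -1]"
    and psi: "\<forall>i\<in>B2 n x H. \<exists>F. psi_cover ends sigma (fst (H i)) (snd (H i)) (x (i-1)) (x i) 2 F"
  shows "\<exists>F F0 P1 P2 P3 P4 T1 T2 T3 T4.
     six_cover ends V E F \<and>
     F = F0 + (image_mset H (mset_set (B0 n x H)) + image_mset H (mset_set (B0 n x H)))
          + {#P1, P2, P3, P4#} + {#T1, T2, T3, T4#} \<and>
     (\<forall>Z\<in>#F0. signed_circuit ends sigma Z) \<and>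
     (\<forall>P\<in>{P1, P2, P3, P4}. subgraph_of ends P V E \<and> is_path ends (x 0) (x n) P) \<and>
     [sgn_of sigma P1, sgn_of sigma P2, sgn_of sigma P3, sgn_of sigma P4] = \<theta> \<and>
     (\<forall>T\<in>{T1, T2}. subgraph_of ends T V E \<and> (\<exists>C. tadpole_with ends sigma (x 0) T C \<and>
          fst C \<subseteq> fst (H (Min (B0 n x H \<union> B2 n x H))) \<and>
          snd C \<subseteq> snd (H (Min (B0 n x H \<union> B2 n x H))))) \<and>
     (\<forall>T\<in>{T3, T4}. subgraph_of ends T V E \<and> (\<exists>C. tadpole_with ends sigma (x n) T C \<and>
          fst C \<subseteq> fst (H (Max (B0 n x H \<union> B2 n x H))) \<and>
          snd C \<subseteq> snd (H (Max (B0 n x H \<union> B2 n x H)))))"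
proof -
  have SD: "series_decomp ends sigma V E n x H" using parts unfolding parts_decomp_def by blast
  interpret sdl ends sigma V E n x H using G SD by unfold_locales
  have cl: "claim n" using claim_all[OF psi] by simp
  have BkB2: "Bk n = B2 n x H" unfolding Bk_def B2_def by simp
  have UkB: "Uk n = B0 n x H \<union> B2 n x H" unfolding Uk_def isU_def B0_def B2_def by auto
  have M0B: "M0 n = image_mset H (mset_set (B0 n x H))" unfolding M0_def L0_def B0_def by simp
  have gd: "good n \<theta>"
  proof (cases "card (B2 n x H) = 1")
    case True
    then show ?thesis using theta1 cl unfolding claim_def BkB2 by simp
  next
    case False
    then have "card (B2 n x H) \<ge> 2" using B2ne by simp
    then show ?thesis using theta2 cl unfolding claim_def BkB2 by auto
  qed
  obtain F0 P1 P2 P3 P4 T1 T2 U1 U2 where s: "st n F0 {#P1, P2, P3, P4#} T1 T2 U1 U2"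
    "\<theta> = [sgn_of sigma P1, sgn_of sigma P2, sgn_of sigma P3, sgn_of sigma P4]"
    using gd unfolding good_def by blast
  let ?F = "tot n F0 {#P1, P2, P3, P4#} T1 T2 U1 U2"
  have sg: "\<forall>S\<in>#?F. subgraph_of ends S V E" using s(1) unfolding st_def Vk_n Ek_n by blast
  have cov: "\<forall>e\<in>E. size (filter_mset (\<lambda>S. e \<in> snd S) ?F) = 6"
    using s(1) unfolding st_def Ek_n cnt_def by blast
  have Feq: "?F = F0 + (image_mset H (mset_set (B0 n x H)) + image_mset H (mset_set (B0 n x H)))
          + {#P1, P2, P3, P4#} + {#T1, T2, U1, U2#}" unfolding tot_def M0B by simp
  have inF: "P1 \<in># ?F" "P2 \<in># ?F" "P3 \<in># ?F" "P4 \<in># ?F" "T1 \<in># ?F" "T2 \<in># ?F" "U1 \<in># ?F" "U2 \<in># ?F"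
    unfolding tot_def by auto
  have paths: "\<forall>P\<in>{P1, P2, P3, P4}. subgraph_of ends P V E \<and> is_path ends (x 0) (x n) P"
    using s(1) sg inF unfolding st_def by auto
  have ts: "\<forall>T\<in>{T1, T2}. subgraph_of ends T V E \<and> (\<exists>C. tadpole_with ends sigma (x 0) T C \<and>
          fst C \<subseteq> fst (H (Min (B0 n x H \<union> B2 n x H))) \<and>
          snd C \<subseteq> snd (H (Min (B0 n x H \<union> B2 n x H))))"
    using s(1) sg inF unfolding st_def UkB by auto
  have us: "\<forall>T\<in>{U1, U2}. subgraph_of ends T V E \<and> (\<exists>C. tadpole_with ends sigma (x n) T C \<and>
          fst C \<subseteq> fst (H (Max (B0 n x H \<union> B2 n x H))) \<and>
          snd C \<subseteq> snd (H (Max (B0 n x H \<union> B2 n x H))))"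
    using s(1) sg inF unfolding st_def UkB by auto
  have six: "six_cover ends V E ?F" unfolding six_cover_def using sg cov by blast
  have circ: "\<forall>Z\<in>#F0. signed_circuit ends sigma Z" using s(1) unfolding st_def by blast
  show ?thesis
    by (rule exI[of _ ?F], rule exI[of _ F0], rule exI[of _ P1], rule exI[of _ P2], rule exI[of _ P3],
        rule exI[of _ P4], rule exI[of _ T1], rule exI[of _ T2], rule exI[of _ U1], rule exI[of _ U2])
       (use six Feq circ paths s(2) ts us in blast)
qed


end
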